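(* Let $T\subset\mathbb{R}^d$ ($d\in\{2,3\}$) be a nondegenerate simplex and $k\ge1$. Every $b\in\mathcal{B}_k(T)$ can be written as $$b=\sum_{i\in\mathcal{V}}\mu_i\lambda_iS^i\ (d=2)\qquad\text{or}\qquad b=\sum_{q=0}^1\sum_{i\in\mathcal{V}}\mu_i^q\lambda_iS^i_q\ (d=3),$$ with $\mu_i,\mu_i^0,\mu_i^1\in\mathbb{P}^{k-1}(T)$. Consequently $\dim\mathcal{B}_k(T)=\frac32k(k+1)$ if $d=2$ and $\dim\mathcal{B}_k(T)=\frac86k(k+1)(k+2)$ if $d=3$.
   Context: $\mathcal{V}=\{0,\dots,d\}$; $V_i$ vertices of $T$, $F_i$ the facet opposite $V_i$, $\lambda_i$ the barycentric coordinates. $\mathbb{D}=\{M\in\mathbb{R}^{d\times d}:\operatorname{tr}M=0\}$, $\operatorname{dev}\tau=\tau-\frac{\operatorname{tr}\tau}{d}I$, $a\otimes b=ab^T$. For $d=2$: $S^i=\operatorname{dev}(\nabla\lambda_{i+1}\otimes\operatorname{curl}\lambda_{i+2})$, $\operatorname{curl}\phi=(-\partial_2\phi,\partial_1\phi)^T$, indices mod 3. For $d=3$: $S^i_0=\operatorname{dev}(\nabla\lambda_{i+1}\otimes(\nabla\lambda_{i+2}\times\nabla\lambda_{i+3}))$, $S^i_1=\operatorname{dev}(\nabla\lambda_{i+2}\otimes(\nabla\lambda_{i+3}\times\nabla\lambda_{i+1}))$, indices mod 4. For a facet with unit normal $n$, $\tau_{nt}=\tau n-(n^T\tau n)n$.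 $\mathbb{P}^k$ denotes polynomials of degree at most $k$. $\Sigma_k(T)=\{\tau\in\mathbb{P}^k(T,\mathbb{D}):\tau_{nt}|_F\in\mathbb{P}^{k-1}(F,\mathbb{R}^{d-1})\text{ for every facet }F\text{ of }T\}$ (the tangential vector field $\tau_{nt}|_F$ is identified with an $\mathbb{R}^{d-1}$-valued function), and $\mathcal{B}_k(T)=\{\tau\in\Sigma_k(T):\tau_{nt}=0\text{ on }\partial T\}$. *)

theory Defs
  imports "HOL-Analysis.Analysis" "HOL-Library.Function_Algebras"
begin

definition poly_fun :: "nat \<Rightarrow> (real^'n::finite \<Rightarrow> real) \<Rightarrow> bool" where
  "poly_fun k f \<longleftrightarrow> (\<exists>c :: ('n \<Rightarrow> nat) \<Rightarrow> real.
     f = (\<lambda>x. \<Sum>\<alpha>\<in>{\<alpha>. sum \<alpha> UNIV \<le> k}. c \<alpha> * (\<Prod>i\<in>UNIV. (x$i) ^ (\<alpha> i))))"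

definition vpoly_fun :: "nat \<Rightarrow> (real^'n::finite \<Rightarrow> real^'m::finite) \<Rightarrow> bool" where
  "vpoly_fun k f \<longleftrightarrow> (\<forall>i. poly_fun k (\<lambda>x. f x $ i))"

definition mpoly_fun :: "nat \<Rightarrow> (real^'n::finite \<Rightarrow> real^'n^'n) \<Rightarrow> bool" where
  "mpoly_fun k f \<longleftrightarrow> (\<forall>i j. poly_fun k (\<lambda>x. f x $ i $ j))"

definition nondeg_simplex :: "(nat \<Rightarrow> real^'n::finite) \<Rightarrow> bool" where
  "nondeg_simplex V \<longleftrightarrow> inj_on V {0..CARD('n)} \<and> \<not> affine_dependent (V ` {0..CARD('n)})"

definition simplex_of :: "(nat \<Rightarrow> real^'n::finite) \<Rightarrow> (real^'n) set" where
  "simplex_of V = convex hull (V ` {0..CARD('n)})"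

definition bary_coeffs :: "(nat \<Rightarrow> real^'n::finite) \<Rightarrow> nat \<Rightarrow> (real^'n) \<times> real" where
  "bary_coeffs V i = (THE p. \<forall>j\<in>{0..CARD('n)}. fst p \<bullet> V j + snd p = (if j = i then 1 else 0))"

definition bary :: "(nat \<Rightarrow> real^'n::finite) \<Rightarrow> nat \<Rightarrow> real^'n \<Rightarrow> real" where
  "bary V i x = fst (bary_coeffs V i) \<bullet> x + snd (bary_coeffs V i)"

definition bgrad :: "(nat \<Rightarrow> real^'n::finite) \<Rightarrow> nat \<Rightarrow> real^'n" where
  "bgrad V i = fst (bary_coeffs V i)"

definition facet :: "(nat \<Rightarrow> real^'n::finite) \<Rightarrow> nat \<Rightarrow> (real^'n) set" where
  "facet V i = convex hull (V ` ({0..CARD('n)} - {i}))"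

definition unit_normal :: "(nat \<Rightarrow> real^'n::finite) \<Rightarrow> nat \<Rightarrow> real^'n \<Rightarrow> bool" where
  "unit_normal V i n \<longleftrightarrow> norm n = 1 \<and>
     (\<forall>j\<in>{0..CARD('n)} - {i}. \<forall>l\<in>{0..CARD('n)} - {i}. n \<bullet> (V j - V l) = 0)"

definition tang_part :: "real^'n^'n \<Rightarrow> real^'n \<Rightarrow> real^'n::finite" where
  "tang_part \<tau> n = \<tau> *v n - (n \<bullet> (\<tau> *v n)) *\<^sub>R n"

definition outer :: "real^'n::finite \<Rightarrow> real^'n \<Rightarrow> real^'n^'n" where
  "outer a b = (\<chi> i j. a$i * b$j)"

definition dev :: "real^'n^'n \<Rightarrow> real^'n^'n::finite" where
  "dev \<tau> = \<tau> - (trace \<tau> / real CARD('n)) *\<^sub>R mat 1"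

definition Sigma_sp :: "nat \<Rightarrow> (nat \<Rightarrow> real^'n::finite) \<Rightarrow> (real^'n \<Rightarrow> real^'n^'n) set" where
  "Sigma_sp k V = {\<tau>. mpoly_fun k \<tau> \<and> (\<forall>x. trace (\<tau> x) = 0) \<and>
     (\<forall>i\<in>{0..CARD('n)}. \<forall>n. unit_normal V i n \<longrightarrow>
        (\<exists>p. vpoly_fun (k - 1) p \<and> (\<forall>x\<in>facet V i. tang_part (\<tau> x) n = p x)))}"

definition Bub_sp :: "nat \<Rightarrow> (nat \<Rightarrow> real^'n::finite) \<Rightarrow> (real^'n \<Rightarrow> real^'n^'n) set" where
  "Bub_sp k V = {\<tau>\<in>Sigma_sp k V.
     \<forall>i\<in>{0..CARD('n)}. \<forall>n. unit_normal V i n \<longrightarrow> (\<forall>x\<in>facet V i. tang_part (\<tau> x) n = 0)}"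

definition fdim :: "('a \<Rightarrow> 'b::real_vector) set \<Rightarrow> nat" where
  "fdim S = vector_space.dim (\<lambda>c f x. c *\<^sub>R f x) S"

text \<open>d = 2: curl of a linear function with gradient g is (-g_2, g_1).\<close>
definition curl2 :: "real^2 \<Rightarrow> real^2" where
  "curl2 g = vector [- (g$2), g$1]"

definition S2 :: "(nat \<Rightarrow> real^2) \<Rightarrow> nat \<Rightarrow> real^2^2" where
  "S2 V i = dev (outer (bgrad V ((i+1) mod 3)) (curl2 (bgrad V ((i+2) mod 3))))"

definition S3 :: "(nat \<Rightarrow> real^3) \<Rightarrow> nat \<Rightarrow> nat \<Rightarrow> real^3^3" where
  "S3 V q i = (if q = 0
     then dev (outer (bgrad V ((i+1) mod 4)) (cross3 (bgrad V ((i+2) mod 4)) (bgrad V ((i+3) mod 4))))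
     else dev (outer (bgrad V ((i+2) mod 4)) (cross3 (bgrad V ((i+3) mod 4)) (bgrad V ((i+1) mod 4)))))"

end

theory Submission
  imports Defs
begin

definition mon :: "('n::finite \<Rightarrow> nat) \<Rightarrow> real^'n \<Rightarrow> real" where
  "mon \<alpha> x = (\<Prod>i\<in>UNIV. (x$i) ^ (\<alpha> i))"

definition Mset :: "nat \<Rightarrow> ('n::finite \<Rightarrow> nat) set" where
  "Mset k = {\<alpha>. sum \<alpha> UNIV \<le> k}"

lemma finite_Mset[simp]: "finite (Mset k :: ('n::finite \<Rightarrow> nat) set)"
proof -
  have "Mset k \<subseteq> Pi\<^sub>E (UNIV::'n set) (\<lambda>_. {..k})"
    unfolding Mset_def PiE_UNIV_domain
  proof (clarsimp simp: Pi_def)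
    fix \<alpha> :: "'n \<Rightarrow> nat" and i assume "sum \<alpha> UNIV \<le> k"
    moreover have "\<alpha> i \<le> sum \<alpha> UNIV" by (rule member_le_sum) auto
    ultimately show "\<alpha> i \<le> k" by simp
  qed
  moreover have "finite (Pi\<^sub>E (UNIV::'n set) (\<lambda>_. {..k}))" by (rule finite_PiE) auto
  ultimately show ?thesis by (rule finite_subset)
qed

lemma poly_fun_iff: "poly_fun k f \<longleftrightarrow> (\<exists>c. f = (\<lambda>x. \<Sum>\<alpha>\<in>Mset k. c \<alpha> * mon \<alpha> x))"
  unfolding poly_fun_def Mset_def mon_def by simp

lemma pf_zero: "poly_fun k (\<lambda>x. 0)"
  unfolding poly_fun_iff by (rule exI[of _ "\<lambda>_. 0"]) simp

lemma pf_add: "poly_fun k f \<Longrightarrow> poly_fun k g \<Longrightarrow> poly_fun k (\<lambda>x. f x + g x)"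
proof -
  assume "poly_fun k f" "poly_fun k g"
  then obtain c d where "f = (\<lambda>x. \<Sum>\<alpha>\<in>Mset k. c \<alpha> * mon \<alpha> x)" "g = (\<lambda>x. \<Sum>\<alpha>\<in>Mset k. d \<alpha> * mon \<alpha> x)"
    unfolding poly_fun_iff by auto
  then show ?thesis unfolding poly_fun_iff
    by (auto intro!: exI[of _ "\<lambda>\<alpha>. c \<alpha> + d \<alpha>"] simp: sum.distrib distrib_right)
qed

lemma pf_scale: "poly_fun k f \<Longrightarrow> poly_fun k (\<lambda>x. r * f x)"
proof -
  assume "poly_fun k f"
  then obtain c where "f = (\<lambda>x. \<Sum>\<alpha>\<in>Mset k. c \<alpha> * mon \<alpha> x)"
    unfolding poly_fun_iff by auto
  then show ?thesis unfolding poly_fun_iff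
    by (auto intro!: exI[of _ "\<lambda>\<alpha>. r * c \<alpha>"] simp: sum_distrib_left mult.assoc)
qed

lemma pf_neg: "poly_fun k f \<Longrightarrow> poly_fun k (\<lambda>x. - f x)"
  using pf_scale[of k f "-1"] by simp

lemma pf_diff: "poly_fun k f \<Longrightarrow> poly_fun k g \<Longrightarrow> poly_fun k (\<lambda>x. f x - g x)"
  using pf_add[of k f "\<lambda>x. - g x"] pf_neg[of k g] by simp

lemma pf_sum: "finite S \<Longrightarrow> (\<And>i. i \<in> S \<Longrightarrow> poly_fun k (f i)) \<Longrightarrow> poly_fun k (\<lambda>x. \<Sum>i\<in>S. f i x)"
  by (induction S rule: finite_induct) (auto intro: pf_zero pf_add)

lemma Mset_mono: "k \<le> l \<Longrightarrow> Mset k \<subseteq> Mset l"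
  unfolding Mset_def by auto

lemma pf_deg_mono: assumes "k \<le> l" "poly_fun k f" shows "poly_fun l f"
proof -
  obtain c where c: "f = (\<lambda>x. \<Sum>\<alpha>\<in>Mset k. c \<alpha> * mon \<alpha> x)" using assms(2) unfolding poly_fun_iff by auto
  let ?c = "\<lambda>\<alpha>. if \<alpha> \<in> Mset k then c \<alpha> else 0"
  have "f = (\<lambda>x. \<Sum>\<alpha>\<in>Mset l. ?c \<alpha> * mon \<alpha> x)"
    unfolding c
  proof
    fix x
    have "(\<Sum>\<alpha>\<in>Mset l. ?c \<alpha> * mon \<alpha> x) = (\<Sum>\<alpha>\<in>Mset k. ?c \<alpha> * mon \<alpha> x)"
      by (rule sum.mono_neutral_right) (use Mset_mono[OF assms(1)] finite_Mset in auto)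
    then show "(\<Sum>\<alpha>\<in>Mset k. c \<alpha> * mon \<alpha> x) = (\<Sum>\<alpha>\<in>Mset l. ?c \<alpha> * mon \<alpha> x)" by simp
  qed
  then show ?thesis unfolding poly_fun_iff by (intro exI[of _ ?c])
qed

lemma pf_monomial: assumes "\<alpha> \<in> Mset k" shows "poly_fun k (mon \<alpha>)"
proof -
  have "mon \<alpha> = (\<lambda>x. \<Sum>\<beta>\<in>Mset k. (if \<beta> = \<alpha> then 1 else 0) * mon \<beta> x)"
  proof
    fix x
    have "(\<Sum>\<beta>\<in>Mset k. (if \<beta> = \<alpha> then 1 else 0) * mon \<beta> x) = (\<Sum>\<beta>\<in>Mset k. if \<beta> = \<alpha> then mon \<beta> x else 0)"
      by (rule sum.cong) auto
    also have "\<dots> = mon \<alpha> x" using assms finite_Mset[of k] by (simp add: sum.delta sum.delta')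
    finally show "mon \<alpha> x = (\<Sum>\<beta>\<in>Mset k. (if \<beta> = \<alpha> then 1 else 0) * mon \<beta> x)" by simp
  qed
  then show ?thesis unfolding poly_fun_iff by (intro exI[of _ "\<lambda>\<beta>. if \<beta> = \<alpha> then 1 else 0"])
qed

lemma mon_add: "mon (\<lambda>i. \<alpha> i + \<beta> i) x = mon \<alpha> x * mon \<beta> x"
  unfolding mon_def by (simp add: power_add prod.distrib)

lemma pf_mult: fixes f g :: "real^'n::finite \<Rightarrow> real"
  assumes "poly_fun k f" "poly_fun l g" shows "poly_fun (k + l) (\<lambda>x. f x * g x)"
proof -
  obtain c where c: "f = (\<lambda>x. \<Sum>\<alpha>\<in>Mset k. c \<alpha> * mon \<alpha> x)" using assms(1) unfolding poly_fun_iff by auto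
  obtain d where d: "g = (\<lambda>x. \<Sum>\<alpha>\<in>Mset l. d \<alpha> * mon \<alpha> x)" using assms(2) unfolding poly_fun_iff by auto
  have eq: "(\<lambda>x. f x * g x) = (\<lambda>x. \<Sum>\<alpha>\<in>Mset k. \<Sum>\<beta>\<in>Mset l. (c \<alpha> * d \<beta>) * mon (\<lambda>i. \<alpha> i + \<beta> i) x)"
    unfolding c d by (simp add: sum_product mon_add mult_ac)
  show ?thesis unfolding eq
  proof (intro pf_sum finite_Mset pf_scale pf_monomial)
    fix \<alpha> \<beta> :: "'n \<Rightarrow> nat" assume "\<alpha> \<in> Mset k" "\<beta> \<in> Mset l"
    then show "(\<lambda>i. \<alpha> i + \<beta> i) \<in> Mset (k + l)" unfolding Mset_def by (simp add: sum.distrib)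
  qed
qed

lemma mon_zero: "mon (\<lambda>_. 0) x = 1" unfolding mon_def by simp

lemma pf_const: "poly_fun k (\<lambda>x::real^'n::finite. c)"
proof -
  have "(\<lambda>_::'n. 0::nat) \<in> Mset k" unfolding Mset_def by simp
  from pf_scale[OF pf_monomial[OF this], of c] show ?thesis by (simp add: mon_zero)
qed

lemma pf_coord: "poly_fun 1 (\<lambda>x::real^'n::finite. x$i)"
proof -
  have "(\<lambda>j::'n. if j = i then 1 else 0::nat) \<in> Mset 1" unfolding Mset_def by (simp add: sum.delta)
  moreover have "mon (\<lambda>j::'n. if j = i then 1 else 0::nat) = (\<lambda>x. x$i)"
  proof
    fix x :: "real^'n"
    have "(\<Prod>j\<in>UNIV. x$j ^ (if j = i then 1 else 0)) = (\<Prod>j\<in>UNIV. if j = i then x$j else 1)"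
      by (rule prod.cong) auto
    then show "mon (\<lambda>j::'n. if j = i then 1 else 0::nat) x = x$i" unfolding mon_def by (simp add: prod.delta)
  qed
  ultimately show ?thesis using pf_monomial by metis
qed

lemma pf_pow: "poly_fun k f \<Longrightarrow> poly_fun (k * m) (\<lambda>x. f x ^ m)"
proof (induction m)
  case 0 then show ?case using pf_const by simp
next
  case (Suc m)
  from pf_mult[OF Suc.prems Suc.IH[OF Suc.prems]] show ?case by simp
qed

lemma pf_prod: "finite S \<Longrightarrow> (\<And>i. i \<in> S \<Longrightarrow> poly_fun (kk i) (f i)) \<Longrightarrow> poly_fun (\<Sum>i\<in>S. kk i) (\<lambda>x. \<Prod>i\<in>S. f i x)"
proof (induction S rule: finite_induct)
  case empty then show ?case using pf_const by simp
next
  case (insert a S)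
  from pf_mult[OF insert.prems[of a] insert.IH] insert show ?case by simp
qed

lemma pf_compose:
  fixes p :: "real^'n::finite \<Rightarrow> real" and A :: "real^'m::finite \<Rightarrow> real^'n"
  assumes "poly_fun k p" "\<And>i. poly_fun 1 (\<lambda>t. A t $ i)"
  shows "poly_fun k (\<lambda>t. p (A t))"
proof -
  obtain c where c: "p = (\<lambda>x. \<Sum>\<alpha>\<in>Mset k. c \<alpha> * mon \<alpha> x)" using assms(1) unfolding poly_fun_iff by auto
  show ?thesis unfolding c mon_def
  proof (intro pf_sum finite_Mset pf_scale)
    fix \<alpha> :: "'n \<Rightarrow> nat" assume a: "\<alpha> \<in> Mset k"
    have "poly_fun (\<Sum>i\<in>UNIV. 1 * \<alpha> i) (\<lambda>t. \<Prod>i\<in>UNIV. A t $ i ^ \<alpha> i)"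
      by (intro pf_prod pf_pow assms(2)) simp
    then show "poly_fun k (\<lambda>t. \<Prod>i\<in>UNIV. A t $ i ^ \<alpha> i)"
      by (rule pf_deg_mono[rotated]) (use a in \<open>simp add: Mset_def\<close>)
  qed
qed

lemma pf_inner: "poly_fun 1 (\<lambda>x::real^'n::finite. a \<bullet> x + c)"
  unfolding inner_vec_def
  by (intro pf_add pf_const pf_sum) (use pf_scale[OF pf_coord] in auto)

lemma pf_mult': "poly_fun k f \<Longrightarrow> poly_fun l g \<Longrightarrow> k + l \<le> m \<Longrightarrow> poly_fun m (\<lambda>x. f x * g x)"
  using pf_mult pf_deg_mono by blast

lemma upoly_zero:
  fixes b :: "nat \<Rightarrow> real"
  assumes "\<epsilon> > 0" "\<And>s. 0 < s \<Longrightarrow> s < \<epsilon> \<Longrightarrow> (\<Sum>i\<le>n. b i * s^i) = 0" "i \<le> n"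
  shows "b i = 0"
proof (rule ccontr)
  assume "b i \<noteq> 0"
  then have "finite {x. (\<Sum>i\<le>n. b i * x^i) = 0}" using polyfun_finite_roots assms(3) by blast
  moreover have "{0<..<\<epsilon>} \<subseteq> {x. (\<Sum>i\<le>n. b i * x^i) = 0}" using assms(2) by auto
  ultimately have "finite {0<..<\<epsilon>}" by (rule finite_subset[rotated])
  then show False using infinite_Ioo[of 0 \<epsilon>] assms(1) by simp
qed

definition vupd :: "real^'n \<Rightarrow> 'n \<Rightarrow> real \<Rightarrow> real^'n" where
  "vupd x a s = (\<chi> i. if i = a then s else x$i)"

lemma mon_vupd: "mon \<alpha> (vupd x a s) = mon (\<alpha>(a:=0)) x * s ^ (\<alpha> a)"
proof -
  have "mon \<alpha> (vupd x a s) = s ^ \<alpha> a * (\<Prod>i\<in>UNIV-{a}. (vupd x a s $ i) ^ \<alpha> i)"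
    unfolding mon_def by (subst prod.remove[of _ a]) (auto simp: vupd_def)
  moreover have "mon (\<alpha>(a:=0)) x = (\<Prod>i\<in>UNIV-{a}. (x $ i) ^ \<alpha> i)"
    unfolding mon_def by (subst prod.remove[of _ a]) auto
  moreover have "(\<Prod>i\<in>UNIV-{a}. (vupd x a s $ i) ^ \<alpha> i) = (\<Prod>i\<in>UNIV-{a}. (x $ i) ^ \<alpha> i)"
    by (rule prod.cong) (auto simp: vupd_def)
  ultimately show ?thesis by simp
qed

definition inbox :: "real \<Rightarrow> real^'n \<Rightarrow> bool" where
  "inbox \<epsilon> x \<longleftrightarrow> (\<forall>i. 0 < x$i \<and> x$i < \<epsilon>)"

lemma coeff_zero_box_aux:
  fixes S :: "'n::finite set"
  assumes "finite S" "\<epsilon> > 0"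
  shows "\<forall>(A :: ('n \<Rightarrow> nat) set) c. finite A \<longrightarrow> (\<forall>\<alpha>\<in>A. \<forall>i. i \<notin> S \<longrightarrow> \<alpha> i = 0) \<longrightarrow>
     (\<forall>x. inbox \<epsilon> x \<longrightarrow> (\<Sum>\<alpha>\<in>A. c \<alpha> * mon \<alpha> x) = 0) \<longrightarrow> (\<forall>\<alpha>\<in>A. c \<alpha> = 0)"
  using assms(1)
proof (induction S rule: finite_induct)
  case empty
  show ?case
  proof (intro allI impI ballI)
    fix A :: "('n \<Rightarrow> nat) set" and c \<alpha>
    assume fA: "finite A" and supp: "\<forall>\<alpha>\<in>A. \<forall>i. i \<notin> {} \<longrightarrow> \<alpha> i = 0"
      and z: "\<forall>x. inbox \<epsilon> x \<longrightarrow> (\<Sum>\<alpha>\<in>A. c \<alpha> * mon \<alpha> x) = 0" and a: "\<alpha> \<in> A"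
    have A0: "\<beta> = (\<lambda>_. 0)" if "\<beta> \<in> A" for \<beta>
      using supp that by (intro ext) simp
    then have A: "A = {\<lambda>_. 0}" using a by blast
    have "inbox \<epsilon> (\<chi> i. \<epsilon>/2)" unfolding inbox_def using assms(2) by simp
    with z have "(\<Sum>\<alpha>\<in>A. c \<alpha> * mon \<alpha> (\<chi> i. \<epsilon>/2)) = 0" by blast
    then show "c \<alpha> = 0" using A a by (simp add: mon_zero)
  qed
next
  case (insert a S)
  show ?case
  proof (intro allI impI ballI)
    fix A :: "('n \<Rightarrow> nat) set" and c \<alpha>
    assume fA: "finite A" and supp: "\<forall>\<alpha>\<in>A. \<forall>i. i \<notin> insert a S \<longrightarrow> \<alpha> i = 0"
      and z: "\<forall>x. inbox \<epsilon> x \<longrightarrow> (\<Sum>\<alpha>\<in>A. c \<alpha> * mon \<alpha> x) = 0" and a: "\<alpha> \<in> A"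
    define N where "N = Max ((\<lambda>\<alpha>. \<alpha> a) ` A)"
    have aN: "\<beta> a \<le> N" if "\<beta> \<in> A" for \<beta> unfolding N_def using fA that by auto
    define C where "C m x = (\<Sum>\<beta>\<in>{\<beta>\<in>A. \<beta> a = m}. c \<beta> * mon (\<beta>(a:=0)) x)" for m x
    have Cz: "C m x = 0" if x: "inbox \<epsilon> x" and m: "m \<le> N" for m x
    proof -
      have "(\<Sum>i\<le>N. C i x * s^i) = 0" if s: "0 < s" "s < \<epsilon>" for s
      proof -
        have "inbox \<epsilon> (vupd x a s)" using x s unfolding inbox_def vupd_def by auto
        then have "0 = (\<Sum>\<beta>\<in>A. c \<beta> * mon \<beta> (vupd x a s))" using z by simp
        also have "\<dots> = (\<Sum>\<beta>\<in>A. c \<beta> * mon (\<beta>(a:=0)) x * s ^ \<beta> a)"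
          by (simp add: mon_vupd mult.assoc)
        also have "\<dots> = (\<Sum>i\<le>N. \<Sum>\<beta>\<in>{\<beta>\<in>A. \<beta> a = i}. c \<beta> * mon (\<beta>(a:=0)) x * s ^ \<beta> a)"
          by (rule sum.group[symmetric]) (use fA aN in \<open>auto simp: image_subset_iff\<close>)
        also have "\<dots> = (\<Sum>i\<le>N. C i x * s^i)"
          unfolding C_def sum_distrib_right by (intro sum.cong refl) simp
        finally show ?thesis by simp
      qed
      then show ?thesis using upoly_zero[where b="\<lambda>i. C i x" and n=N and i=m, OF assms(2)] m by blast
    qed
    define m where "m = \<alpha> a"
    define A' where "A' = (\<lambda>\<beta>. \<beta>(a:=0)) ` {\<beta>\<in>A. \<beta> a = m}"
    define c' where "c' \<beta> = c (\<beta>(a:=m))" for \<beta>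
    have inj: "inj_on (\<lambda>\<beta>. \<beta>(a:=0)) {\<beta>\<in>A. \<beta> a = m}"
    proof (rule inj_onI)
      fix \<beta> \<gamma> assume "\<beta> \<in> {\<beta>\<in>A. \<beta> a = m}" "\<gamma> \<in> {\<beta>\<in>A. \<beta> a = m}" "\<beta>(a:=0) = \<gamma>(a:=0)"
      then have "\<beta> a = \<gamma> a" "\<And>i. i \<noteq> a \<Longrightarrow> \<beta> i = \<gamma> i"
        by (auto dest: fun_cong[where x=i for i]) (metis fun_upd_other)
      then show "\<beta> = \<gamma>" by (intro ext) (metis)
    qed
    have H1: "finite A'" unfolding A'_def using fA by simp
    have H2: "\<forall>\<beta>\<in>A'. \<forall>i. i \<notin> S \<longrightarrow> \<beta> i = 0" unfolding A'_def using supp by auto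
    have H3: "\<forall>x. inbox \<epsilon> x \<longrightarrow> (\<Sum>\<beta>\<in>A'. c' \<beta> * mon \<beta> x) = 0"
      proof (intro allI impI)
        fix x :: "real^'n" assume x: "inbox \<epsilon> x"
        have "(\<Sum>\<beta>\<in>A'. c' \<beta> * mon \<beta> x) = (\<Sum>\<beta>\<in>{\<beta>\<in>A. \<beta> a = m}. c' (\<beta>(a:=0)) * mon (\<beta>(a:=0)) x)"
          unfolding A'_def by (rule sum.reindex[OF inj, unfolded comp_def])
        also have "\<dots> = C m x" unfolding C_def c'_def
        proof (intro sum.cong refl)
          fix \<beta> assume "\<beta> \<in> {\<beta> \<in> A. \<beta> a = m}"
          then have "\<beta>(a:=m) = \<beta>" by auto
          then show "c (\<beta>(a := 0, a := m)) * mon (\<beta>(a := 0)) x = c \<beta> * mon (\<beta>(a := 0)) x" by simp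
        qed
        also have "\<dots> = 0" using Cz[OF x] aN[OF a] unfolding m_def by simp
        finally show "(\<Sum>\<beta>\<in>A'. c' \<beta> * mon \<beta> x) = 0" .
      qed
    have "\<forall>\<beta>\<in>A'. c' \<beta> = 0" using insert.IH H1 H2 H3 by blast
    moreover have "\<alpha>(a:=0) \<in> A'" unfolding A'_def m_def using a by auto
    ultimately have "c' (\<alpha>(a:=0)) = 0" by blast
    then show "c \<alpha> = 0" unfolding c'_def m_def by simp
  qed
qed

lemma coeff_zero_box:
  fixes c :: "('n::finite \<Rightarrow> nat) \<Rightarrow> real"
  assumes "finite A" "\<epsilon> > 0" "\<And>x. inbox \<epsilon> x \<Longrightarrow> (\<Sum>\<alpha>\<in>A. c \<alpha> * mon \<alpha> x) = 0" "\<alpha> \<in> A"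
  shows "c \<alpha> = 0"
  using coeff_zero_box_aux[of "UNIV::'n set" \<epsilon>] assms by auto

lemma pf_zero_box:
  fixes p :: "real^'n::finite \<Rightarrow> real"
  assumes "poly_fun k p" "\<epsilon> > 0" "\<And>x. (\<forall>i. z$i < x$i \<and> x$i < z$i + \<epsilon>) \<Longrightarrow> p x = 0"
  shows "p y = 0"
proof -
  have "poly_fun k (\<lambda>t. p (t + z))"
    by (rule pf_compose[OF assms(1)]) (use pf_add[OF pf_coord pf_const] in simp)
  then obtain c where c: "(\<lambda>t. p (t + z)) = (\<lambda>x. \<Sum>\<alpha>\<in>Mset k. c \<alpha> * mon \<alpha> x)"
    unfolding poly_fun_iff by blast
  have "c \<alpha> = 0" if "\<alpha> \<in> Mset k" for \<alpha>
  proof (rule coeff_zero_box[OF finite_Mset assms(2) _ that])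
    fix x :: "real^'n" assume "inbox \<epsilon> x"
    then have "p (x + z) = 0" by (intro assms(3)) (auto simp: inbox_def)
    then show "(\<Sum>\<alpha>\<in>Mset k. c \<alpha> * mon \<alpha> x) = 0" using fun_cong[OF c, of x] by simp
  qed
  then have "p ((y - z) + z) = 0" using fun_cong[OF c, of "y - z"] by simp
  then show ?thesis by simp
qed

lemma pf_zero_coeffs:
  fixes c :: "('n::finite \<Rightarrow> nat) \<Rightarrow> real"
  assumes "finite A" "\<And>x. (\<Sum>\<alpha>\<in>A. c \<alpha> * mon \<alpha> x) = 0" "\<alpha> \<in> A"
  shows "c \<alpha> = 0"
  by (rule coeff_zero_box[OF assms(1), of 1]) (use assms in auto)

lemma nd_hull:
  fixes V :: "nat \<Rightarrow> real^'n::finite"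
  assumes "nondeg_simplex V"
  shows "affine hull (V ` {0..CARD('n)}) = UNIV"
proof -
  have inj: "inj_on V {0..CARD('n)}" and ind: "\<not> affine_dependent (V ` {0..CARD('n)})"
    using assms unfolding nondeg_simplex_def by auto
  have "card (V ` {0..CARD('n)}) = CARD('n) + 1" using card_image[OF inj] by simp
  with aff_dim_affine_independent[OF ind] have "aff_dim (V ` {0..CARD('n)}) = int CARD('n)" by simp
  then show ?thesis using aff_dim_eq_full[of "V ` {0..CARD('n)}"] by simp
qed

lemma affine_zero:
  fixes V :: "nat \<Rightarrow> real^'n::finite"
  assumes "nondeg_simplex V" "\<And>j. j \<in> {0..CARD('n)} \<Longrightarrow> a \<bullet> V j + c = 0"
  shows "a = 0 \<and> c = 0"
proof -
  have "a \<bullet> V j = -c" if "j \<in> {0..CARD('n)}" for j using assms(2)[OF that] by linarith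
  then have "V ` {0..CARD('n)} \<subseteq> {x. a \<bullet> x = -c}" by auto
  then have "affine hull (V ` {0..CARD('n)}) \<subseteq> {x. a \<bullet> x = -c}"
    by (rule hull_minimal) (rule affine_hyperplane)
  then have all: "\<And>x. a \<bullet> x = -c" using nd_hull[OF assms(1)] by auto
  from all[of 0] have c: "c = 0" by simp
  from all[of a] c have "a = 0" by simp
  with c show ?thesis by simp
qed

lemma bary_ex:
  fixes V :: "nat \<Rightarrow> real^'n::finite"
  assumes "nondeg_simplex V" "i \<in> {0..CARD('n)}"
  shows "\<exists>p. \<forall>j\<in>{0..CARD('n)}. fst p \<bullet> V j + snd p = (if j = i then 1 else 0)"
proof -
  have inj: "inj_on V {0..CARD('n)}" and ind: "\<not> affine_dependent (V ` {0..CARD('n)})"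
    using assms unfolding nondeg_simplex_def by auto
  have "{0..CARD('n)} = insert 0 {1..CARD('n)}" by auto
  then have ins: "V ` {0..CARD('n)} = insert (V 0) (V ` {1..CARD('n)})" by simp
  have notin: "V 0 \<notin> V ` {1..CARD('n)}"
  proof
    assume "V 0 \<in> V ` {1..CARD('n)}"
    then obtain x where x: "x \<in> {1..CARD('n)}" "V 0 = V x" by auto
    then have "0 = x" using inj_onD[OF inj x(2)] by auto
    with x show False by simp
  qed
  have "\<not> dependent ((\<lambda>x. - V 0 + x) ` (V ` {1..CARD('n)}))"
    using ind affine_dependent_iff_dependent[OF notin] ins by simp
  then have indB: "independent ((\<lambda>j. V j - V 0) ` {1..CARD('n)})"
    by (simp add: image_image)
  define f where "f v = (if i \<noteq> 0 \<and> v = V i - V 0 then 1 else 0) - (if i = 0 then 1 else 0 :: real)" for v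
  obtain g where g: "linear g" "\<And>x. x \<in> (\<lambda>j. V j - V 0) ` {1..CARD('n)} \<Longrightarrow> g x = f x"
    using linear_independent_extend[OF indB, of f] by blast
  interpret g: linear g by fact
  define a :: "real^'n" where "a = (\<chi> l. g (axis l 1))"
  have ga: "g x = a \<bullet> x" for x
  proof -
    have "g x = g (\<Sum>l\<in>UNIV. x$l *\<^sub>R axis l 1)"
      using basis_expansion[of x] by (simp add: scalar_mult_eq_scaleR)
    also have "\<dots> = (\<Sum>l\<in>UNIV. x$l * g (axis l 1))" by (simp add: g.sum g.scale)
    also have "\<dots> = a \<bullet> x" unfolding a_def inner_vec_def by (simp add: mult.commute)
    finally show ?thesis .
  qed
  define c where "c = (if i = 0 then 1 else 0) - a \<bullet> V 0"
  have "\<forall>j\<in>{0..CARD('n)}. a \<bullet> V j + c = (if j = i then 1 else 0)"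
  proof
    fix j assume j: "j \<in> {0..CARD('n)}"
    show "a \<bullet> V j + c = (if j = i then 1 else 0)"
    proof (cases "j = 0")
      case True then show ?thesis unfolding c_def by simp
    next
      case False
      then have j1: "j \<in> {1..CARD('n)}" using j by auto
      then have "a \<bullet> (V j - V 0) = f (V j - V 0)" using g(2)[of "V j - V 0"] ga by auto
      moreover have "(V j - V 0 = V i - V 0) \<longleftrightarrow> j = i" using inj j assms(2) by (auto simp: inj_on_def)
      ultimately show ?thesis using False unfolding c_def f_def by (auto simp: inner_diff_right)
    qed
  qed
  then show ?thesis by (intro exI[of _ "(a, c)"]) simp
qed

lemma bary_coeffs_prop:
  fixes V :: "nat \<Rightarrow> real^'n::finite"
  assumes "nondeg_simplex V" "i \<in> {0..CARD('n)}" "j \<in> {0..CARD('n)}"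
  shows "bgrad V i \<bullet> V j + snd (bary_coeffs V i) = (if j = i then 1 else 0)"
proof -
  have "\<exists>!p. \<forall>j\<in>{0..CARD('n)}. fst p \<bullet> V j + snd p = (if j = i then 1 else 0)"
  proof (rule ex_ex1I)
    show "\<exists>p. \<forall>j\<in>{0..CARD('n)}. fst p \<bullet> V j + snd p = (if j = i then 1 else 0)"
      by (rule bary_ex[OF assms(1,2)])
  next
    fix p q assume p: "\<forall>j\<in>{0..CARD('n)}. fst p \<bullet> V j + snd p = (if j = i then 1 else 0)"
      and q: "\<forall>j\<in>{0..CARD('n)}. fst q \<bullet> V j + snd q = (if j = i then 1 else 0)"
    have "(fst p - fst q) \<bullet> V j + (snd p - snd q) = 0" if j: "j \<in> {0..CARD('n)}" for j
    proof -
      have "(fst p - fst q) \<bullet> V j + (snd p - snd q) = (fst p \<bullet> V j + snd p) - (fst q \<bullet> V j + snd q)"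
        by (simp add: inner_diff_left)
      also have "\<dots> = 0" using p[rule_format, OF j] q[rule_format, OF j] by simp
      finally show ?thesis .
    qed
    from affine_zero[OF assms(1) this] show "p = q" by (simp add: prod_eq_iff)
  qed
  from theI'[OF this] assms(3) show ?thesis
    unfolding bgrad_def bary_coeffs_def[symmetric] by blast
qed

lemma bary_vertex:
  fixes V :: "nat \<Rightarrow> real^'n::finite"
  assumes "nondeg_simplex V" "i \<in> {0..CARD('n)}" "j \<in> {0..CARD('n)}"
  shows "bary V i (V j) = (if j = i then 1 else 0)"
  using bary_coeffs_prop[OF assms] unfolding bary_def bgrad_def by simp

lemma bary_alt: "bary V i x = bgrad V i \<bullet> x + snd (bary_coeffs V i)"
  unfolding bary_def bgrad_def by simp

lemma bgrad_diff:
  fixes V :: "nat \<Rightarrow> real^'n::finite"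
  assumes "nondeg_simplex V" "i \<in> {0..CARD('n)}" "j \<in> {0..CARD('n)}" "l \<in> {0..CARD('n)}"
  shows "bgrad V i \<bullet> (V j - V l) = (if j = i then 1 else 0) - (if l = i then 1 else 0)"
  using bary_coeffs_prop[OF assms(1,2,3)] bary_coeffs_prop[OF assms(1,2,4)]
  by (simp add: inner_diff_right)

lemma sum_bary_coeffs:
  fixes V :: "nat \<Rightarrow> real^'n::finite"
  assumes "nondeg_simplex V"
  shows "(\<Sum>i\<in>{0..CARD('n)}. bgrad V i) = 0" "(\<Sum>i\<in>{0..CARD('n)}. snd (bary_coeffs V i)) = 1"
proof -
  have "(\<Sum>i\<in>{0..CARD('n)}. bgrad V i) \<bullet> V j + ((\<Sum>i\<in>{0..CARD('n)}. snd (bary_coeffs V i)) - 1) = 0"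
    if j: "j \<in> {0..CARD('n)}" for j
  proof -
    have "(\<Sum>i\<in>{0..CARD('n)}. bgrad V i) \<bullet> V j + (\<Sum>i\<in>{0..CARD('n)}. snd (bary_coeffs V i))
        = (\<Sum>i\<in>{0..CARD('n)}. bgrad V i \<bullet> V j + snd (bary_coeffs V i))"
      by (simp add: inner_sum_left sum.distrib)
    also have "\<dots> = (\<Sum>i\<in>{0..CARD('n)}. if j = i then 1 else 0)"
      by (rule sum.cong) (use bary_coeffs_prop[OF assms _ j] in auto)
    also have "\<dots> = 1" using j by simp
    finally show ?thesis by simp
  qed
  from affine_zero[OF assms this] show "(\<Sum>i\<in>{0..CARD('n)}. bgrad V i) = 0" "(\<Sum>i\<in>{0..CARD('n)}. snd (bary_coeffs V i)) = 1"
    by auto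
qed

lemma sum_bary:
  fixes V :: "nat \<Rightarrow> real^'n::finite"
  assumes "nondeg_simplex V"
  shows "(\<Sum>i\<in>{0..CARD('n)}. bary V i x) = 1"
  using sum_bary_coeffs[OF assms] unfolding bary_alt
  by (simp add: sum.distrib inner_sum_left[symmetric])

lemma expansion_aux:
  fixes V :: "nat \<Rightarrow> real^'n::finite"
  assumes "nondeg_simplex V"
  shows "e = (\<Sum>i\<in>{0..CARD('n)}. (e \<bullet> V i) *\<^sub>R bgrad V i) \<and> (\<Sum>i\<in>{0..CARD('n)}. (e \<bullet> V i) * snd (bary_coeffs V i)) = 0"
proof -
  have "(e - (\<Sum>i\<in>{0..CARD('n)}. (e \<bullet> V i) *\<^sub>R bgrad V i)) \<bullet> V j + (- (\<Sum>i\<in>{0..CARD('n)}. (e \<bullet> V i) * snd (bary_coeffs V i))) = 0"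
    if j: "j \<in> {0..CARD('n)}" for j
  proof -
    have "(\<Sum>i\<in>{0..CARD('n)}. (e \<bullet> V i) *\<^sub>R bgrad V i) \<bullet> V j + (\<Sum>i\<in>{0..CARD('n)}. (e \<bullet> V i) * snd (bary_coeffs V i))
      = (\<Sum>i\<in>{0..CARD('n)}. (e \<bullet> V i) * (bgrad V i \<bullet> V j + snd (bary_coeffs V i)))"
      by (simp add: inner_sum_left sum.distrib[symmetric] distrib_left)
    also have "\<dots> = (\<Sum>i\<in>{0..CARD('n)}. if i = j then e \<bullet> V i else 0)"
      by (rule sum.cong) (use bary_coeffs_prop[OF assms _ j] in auto)
    also have "\<dots> = e \<bullet> V j" using j by (simp add: sum.delta')
    finally show ?thesis by (simp add: inner_diff_left)
  qed
  from affine_zero[OF assms this] show ?thesis by simp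
qed

lemma expansion:
  fixes V :: "nat \<Rightarrow> real^'n::finite"
  assumes "nondeg_simplex V"
  shows "e = (\<Sum>i\<in>{0..CARD('n)}. (e \<bullet> V i) *\<^sub>R bgrad V i)"
  using expansion_aux[OF assms] by blast

lemma point_expansion:
  fixes V :: "nat \<Rightarrow> real^'n::finite"
  assumes "nondeg_simplex V"
  shows "x = (\<Sum>i\<in>{0..CARD('n)}. bary V i x *\<^sub>R V i)"
proof -
  have key: "e \<bullet> (\<Sum>i\<in>{0..CARD('n)}. bary V i x *\<^sub>R V i) = e \<bullet> x" for e
  proof -
    have "e \<bullet> (\<Sum>i\<in>{0..CARD('n)}. bary V i x *\<^sub>R V i) = (\<Sum>i\<in>{0..CARD('n)}. bary V i x * (e \<bullet> V i))"
      by (simp add: inner_sum_right)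
    also have "\<dots> = (\<Sum>i\<in>{0..CARD('n)}. (e \<bullet> V i) * (bgrad V i \<bullet> x)) + (\<Sum>i\<in>{0..CARD('n)}. (e \<bullet> V i) * snd (bary_coeffs V i))"
      unfolding bary_alt distrib_right sum.distrib by (simp add: mult.commute)
    also have "(\<Sum>i\<in>{0..CARD('n)}. (e \<bullet> V i) * (bgrad V i \<bullet> x)) = (\<Sum>i\<in>{0..CARD('n)}. (e \<bullet> V i) *\<^sub>R bgrad V i) \<bullet> x"
      by (simp add: inner_sum_left)
    also have "\<dots> = e \<bullet> x" using expansion[OF assms, of e] by simp
    finally show ?thesis using expansion_aux[OF assms, of e] by simp
  qed
  let ?R = "(\<Sum>i\<in>{0..CARD('n)}. bary V i x *\<^sub>R V i)"
  have "(x - ?R) \<bullet> (x - ?R) = 0" using key[of "x - ?R"] by (simp add: inner_diff_left inner_commute)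
  then show ?thesis by simp
qed

lemma expansion_base:
  fixes V :: "nat \<Rightarrow> real^'n::finite"
  assumes "nondeg_simplex V" "l \<in> {0..CARD('n)}"
  shows "e = (\<Sum>i\<in>{0..CARD('n)} - {l}. (e \<bullet> (V i - V l)) *\<^sub>R bgrad V i)"
proof -
  have "(\<Sum>i\<in>{0..CARD('n)}. (e \<bullet> (V i - V l)) *\<^sub>R bgrad V i)
      = (\<Sum>i\<in>{0..CARD('n)}. (e \<bullet> V i) *\<^sub>R bgrad V i) - (e \<bullet> V l) *\<^sub>R (\<Sum>i\<in>{0..CARD('n)}. bgrad V i)"
    unfolding inner_diff_right scaleR_diff_left sum_subtractf scaleR_sum_right ..
  also have "\<dots> = e" using expansion[OF assms(1), of e] sum_bary_coeffs(1)[OF assms(1)] by simp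
  finally have "e = (\<Sum>i\<in>{0..CARD('n)}. (e \<bullet> (V i - V l)) *\<^sub>R bgrad V i)" by simp
  also have "\<dots> = (\<Sum>i\<in>{0..CARD('n)} - {l}. (e \<bullet> (V i - V l)) *\<^sub>R bgrad V i)"
    by (rule sum.mono_neutral_right) auto
  finally show ?thesis .
qed

lemma card_ge1: "1 \<le> CARD('n::finite)"
  by (simp add: Suc_leI)

lemma other_index:
  assumes "i \<in> {0..CARD('n::finite)}"
  shows "\<exists>l. l \<in> {0..CARD('n)} \<and> l \<noteq> i"
proof (cases "i = 0")
  case True then show ?thesis using card_ge1[where 'n='n] by (intro exI[of _ 1]) auto
next
  case False then show ?thesis by (intro exI[of _ 0]) auto
qed

lemma bgrad_nz:
  fixes V :: "nat \<Rightarrow> real^'n::finite"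
  assumes "nondeg_simplex V" "i \<in> {0..CARD('n)}"
  shows "bgrad V i \<noteq> 0"
proof
  assume z: "bgrad V i = 0"
  obtain l where l: "l \<in> {0..CARD('n)}" "l \<noteq> i"
    using other_index[OF assms(2)] by blast
  have "bgrad V i \<bullet> (V i - V l) = 1" using bgrad_diff[OF assms(1,2,2) l(1)] l by simp
  with z show False by simp
qed

lemma unit_normal_par:
  fixes V :: "nat \<Rightarrow> real^'n::finite"
  assumes "nondeg_simplex V" "j \<in> {0..CARD('n)}" "unit_normal V j n"
  shows "\<exists>s. n = s *\<^sub>R bgrad V j"
proof -
  obtain l where l: "l \<in> {0..CARD('n)}" "l \<noteq> j"
    using other_index[OF assms(2)] by blast
  have "n = (\<Sum>i\<in>{0..CARD('n)} - {l}. (n \<bullet> (V i - V l)) *\<^sub>R bgrad V i)"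
    by (rule expansion_base[OF assms(1) l(1)])
  also have "\<dots> = (\<Sum>i\<in>{0..CARD('n)} - {l}. if i = j then (n \<bullet> (V i - V l)) *\<^sub>R bgrad V i else 0)"
    by (rule sum.cong) (use assms(3) l in \<open>auto simp: unit_normal_def\<close>)
  also have "\<dots> = (n \<bullet> (V j - V l)) *\<^sub>R bgrad V j" using assms(2) l by (simp add: sum.delta')
  finally show ?thesis by blast
qed

lemma pf_bary: "poly_fun 1 (bary V i)"
  unfolding bary_def by (rule pf_inner)

lemma bary_facet:
  fixes V :: "nat \<Rightarrow> real^'n::finite"
  assumes "nondeg_simplex V" "j \<in> {0..CARD('n)}" "x \<in> facet V j"
  shows "bary V j x = 0"
proof -
  have "V ` ({0..CARD('n)} - {j}) \<subseteq> {x. bgrad V j \<bullet> x = - snd (bary_coeffs V j)}"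
    using bary_coeffs_prop[OF assms(1,2)] by (force simp: algebra_simps)
  then have "facet V j \<subseteq> {x. bgrad V j \<bullet> x = - snd (bary_coeffs V j)}"
    unfolding facet_def by (rule hull_minimal) (rule convex_hyperplane)
  then show ?thesis using assms(3) unfolding bary_alt by auto
qed

lemma sum_fun_upd_UNIV:
  fixes \<alpha> :: "'n::finite \<Rightarrow> nat"
  shows "sum (\<alpha>(e:=m)) UNIV + \<alpha> e = sum \<alpha> UNIV + m"
proof -
  have "sum (\<alpha>(e:=m)) UNIV = m + sum (\<alpha>(e:=m)) (UNIV - {e})" by (subst sum.remove[of _ e]) auto
  moreover have "sum \<alpha> UNIV = \<alpha> e + sum \<alpha> (UNIV - {e})" by (subst sum.remove[of _ e]) auto
  moreover have "sum (\<alpha>(e:=m)) (UNIV - {e}) = sum \<alpha> (UNIV - {e})" by (rule sum.cong) auto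
  ultimately show ?thesis by simp
qed

lemma vupd_same: "vupd t e (t$e) = t"
  unfolding vupd_def by (simp add: vec_eq_iff)

lemma pf_vupd_coord: "poly_fun 1 (\<lambda>t. vupd t e s $ i)"
proof (cases "i = e")
  case True then show ?thesis unfolding vupd_def by (simp add: pf_const)
next
  case False
  have "(\<lambda>t. vupd t e s $ i) = (\<lambda>t. t $ i)" using False unfolding vupd_def by simp
  then show ?thesis using pf_coord by metis
qed

lemma split_var:
  fixes P :: "real^'n::finite \<Rightarrow> real"
  assumes "poly_fun k P"
  shows "\<exists>Q. poly_fun (k - 1) Q \<and> (\<forall>t. P t = P (vupd t e 0) + t$e * Q t)"
proof -
  obtain c where c: "P = (\<lambda>x. \<Sum>\<alpha>\<in>Mset k. c \<alpha> * mon \<alpha> x)" using assms unfolding poly_fun_iff by blast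
  define Q where "Q t = (\<Sum>\<alpha>\<in>Mset k \<inter> - {\<alpha>. \<alpha> e = 0}. c \<alpha> * mon (\<alpha>(e := \<alpha> e - 1)) t)" for t
  have "poly_fun (k - 1) Q" unfolding Q_def
  proof (intro pf_sum pf_scale)
    show "finite (Mset k \<inter> - {\<alpha>. \<alpha> e = 0})" by simp
  next
    fix \<alpha> :: "'n \<Rightarrow> nat" assume "\<alpha> \<in> Mset k \<inter> - {\<alpha>. \<alpha> e = 0}"
    then have "sum \<alpha> UNIV \<le> k" "\<alpha> e \<noteq> 0" unfolding Mset_def by auto
    moreover have "sum (\<alpha>(e := \<alpha> e - 1)) UNIV + \<alpha> e = sum \<alpha> UNIV + (\<alpha> e - 1)" by (rule sum_fun_upd_UNIV)
    ultimately have "\<alpha>(e := \<alpha> e - 1) \<in> Mset (k - 1)" unfolding Mset_def by simp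
    then show "poly_fun (k - 1) (mon (\<alpha>(e := \<alpha> e - 1)))" by (rule pf_monomial)
  qed
  moreover have "P t = P (vupd t e 0) + t$e * Q t" for t
  proof -
    have m1: "mon \<alpha> t = (if \<alpha> e = 0 then mon \<alpha> t else t$e * mon (\<alpha>(e := \<alpha> e - 1)) t)" for \<alpha>
    proof (cases "\<alpha> e = 0")
      case False
      have "mon \<alpha> t = mon (\<alpha>(e:=0)) t * (t$e) ^ (\<alpha> e)" using mon_vupd[of \<alpha> t e "t$e"] by (simp add: vupd_same)
      moreover have "mon (\<alpha>(e := \<alpha> e - 1)) t = mon (\<alpha>(e:=0)) t * (t$e) ^ (\<alpha> e - 1)"
        using mon_vupd[of "\<alpha>(e := \<alpha> e - 1)" t e "t$e"] by (simp add: vupd_same)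
      moreover have "(t$e) ^ (\<alpha> e) = t$e * (t$e) ^ (\<alpha> e - 1)" using False by (cases "\<alpha> e") auto
      ultimately show ?thesis using False by simp
    qed simp
    have m0: "mon \<alpha> (vupd t e 0) = (if \<alpha> e = 0 then mon \<alpha> t else 0)" for \<alpha>
    proof -
      have "mon \<alpha> (vupd t e 0) = mon (\<alpha>(e:=0)) t * 0 ^ (\<alpha> e)" by (rule mon_vupd)
      moreover have "\<alpha> e = 0 \<Longrightarrow> \<alpha>(e:=0) = \<alpha>" by auto
      ultimately show ?thesis by simp
    qed
    have "P t = (\<Sum>\<alpha>\<in>Mset k. if \<alpha> e = 0 then c \<alpha> * mon \<alpha> t else c \<alpha> * (t$e * mon (\<alpha>(e := \<alpha> e - 1)) t))"
      unfolding c by (rule sum.cong[OF refl]) (subst m1, simp)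
    also have "\<dots> = (\<Sum>\<alpha>\<in>Mset k \<inter> {\<alpha>. \<alpha> e = 0}. c \<alpha> * mon \<alpha> t) + t$e * Q t"
      unfolding Q_def by (subst sum.If_cases) (simp_all add: sum_distrib_left mult_ac)
    also have "(\<Sum>\<alpha>\<in>Mset k \<inter> {\<alpha>. \<alpha> e = 0}. c \<alpha> * mon \<alpha> t) = P (vupd t e 0)"
    proof -
      have "P (vupd t e 0) = (\<Sum>\<alpha>\<in>Mset k. if \<alpha> e = 0 then c \<alpha> * mon \<alpha> t else 0)"
        unfolding c by (rule sum.cong[OF refl]) (simp add: m0)
      also have "\<dots> = (\<Sum>\<alpha>\<in>Mset k \<inter> {\<alpha>. \<alpha> e = 0}. c \<alpha> * mon \<alpha> t)"
        by (subst sum.If_cases) simp_all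
      finally show ?thesis by simp
    qed
    finally show ?thesis .
  qed
  ultimately show ?thesis by blast
qed


lemma division:
  fixes V :: "nat \<Rightarrow> real^'n::finite" and p :: "real^'n \<Rightarrow> real"
  assumes nd: "nondeg_simplex V" and j: "j \<in> {0..CARD('n)}" and pp: "poly_fun k p"
    and pz: "\<And>x. x \<in> facet V j \<Longrightarrow> p x = 0"
  shows "\<exists>q. poly_fun (k - 1) q \<and> (\<forall>x. p x = bary V j x * q x)"
proof -
  obtain j0 where j0: "j0 \<in> {0..CARD('n)}" "j0 \<noteq> j" using other_index[OF j] by blast
  define J where "J = {0..CARD('n)} - {j0}"
  have "card J = card (UNIV :: 'n set)" unfolding J_def using j0 by simp
  then obtain \<sigma> where \<sigma>: "bij_betw \<sigma> (UNIV :: 'n set) J"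
    using finite_same_card_bij[of "UNIV :: 'n set" J] unfolding J_def by auto
  have \<sigma>J: "\<sigma> i \<in> J" for i using \<sigma> by (auto simp: bij_betw_def)
  have jJ: "j \<in> J" unfolding J_def using j j0 by auto
  obtain e where e: "\<sigma> e = j" using \<sigma> jJ by (metis bij_betw_imp_surj_on imageE)
  have reidx: "(\<Sum>i\<in>UNIV. h (\<sigma> i)) = (\<Sum>l\<in>J. h l)" for h :: "nat \<Rightarrow> real^'n"
    by (rule sum.reindex_bij_betw[OF \<sigma>])
  have reidxr: "(\<Sum>i\<in>UNIV. h (\<sigma> i)) = (\<Sum>l\<in>J. h l)" for h :: "nat \<Rightarrow> real"
    by (rule sum.reindex_bij_betw[OF \<sigma>])
  define A where "A t = V j0 + (\<Sum>i\<in>UNIV. (t$i) *\<^sub>R (V (\<sigma> i) - V j0))" for t :: "real^'n"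
  define Lam where "Lam x = (\<chi> i. bary V (\<sigma> i) x)" for x :: "real^'n"
  have ALam: "A (Lam x) = x" for x
  proof -
    have "A (Lam x) = V j0 + (\<Sum>l\<in>J. bary V l x *\<^sub>R (V l - V j0))"
      unfolding A_def Lam_def using reidx[of "\<lambda>l. bary V l x *\<^sub>R (V l - V j0)"] by simp
    also have "(\<Sum>l\<in>J. bary V l x *\<^sub>R (V l - V j0)) = (\<Sum>l\<in>{0..CARD('n)}. bary V l x *\<^sub>R (V l - V j0))"
      unfolding J_def by (rule sum.mono_neutral_left) auto
    also have "\<dots> = (\<Sum>l\<in>{0..CARD('n)}. bary V l x *\<^sub>R V l) - (\<Sum>l\<in>{0..CARD('n)}. bary V l x) *\<^sub>R V j0"
      by (simp add: scaleR_diff_right sum_subtractf scaleR_sum_left)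
    also have "\<dots> = x - V j0" using point_expansion[OF nd, of x] sum_bary[OF nd, of x] by simp
    finally show ?thesis by simp
  qed
  have Apf: "poly_fun 1 (\<lambda>t. A t $ r)" for r
  proof -
    have "(\<lambda>t. A t $ r) = (\<lambda>t. V j0 $ r + (\<Sum>i\<in>UNIV. (V (\<sigma> i) - V j0) $ r * t $ i))"
      unfolding A_def by (simp add: mult.commute)
    moreover have "poly_fun 1 (\<lambda>t. V j0 $ r + (\<Sum>i\<in>UNIV. (V (\<sigma> i) - V j0) $ r * t $ i))"
      by (intro pf_add pf_const pf_sum pf_scale pf_coord) simp
    ultimately show ?thesis by simp
  qed
  have Lpf: "poly_fun 1 (\<lambda>x. Lam x $ i)" for i
  proof -
    have "(\<lambda>x. Lam x $ i) = bary V (\<sigma> i)" unfolding Lam_def by simp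
    then show ?thesis using pf_bary by metis
  qed
  define P where "P t = p (A t)" for t
  have Ppf: "poly_fun k P" unfolding P_def by (rule pf_compose[OF pp Apf])
  obtain Q where Q: "poly_fun (k - 1) Q" "\<And>t. P t = P (vupd t e 0) + t$e * Q t"
    using split_var[OF Ppf, of e] by blast
  define \<epsilon> :: real where "\<epsilon> = 1 / (CARD('n) + 1)"
  have \<epsilon>: "\<epsilon> > 0" unfolding \<epsilon>_def by simp
  have Rz: "P (vupd t e 0) = 0" for t
  proof (rule pf_zero_box[where p="\<lambda>t. P (vupd t e 0)" and z=0, OF _ \<epsilon>])
    show "poly_fun k (\<lambda>t. P (vupd t e 0))" by (rule pf_compose[OF Ppf pf_vupd_coord])
  next
    fix x :: "real^'n" assume box: "\<forall>i. 0 $ i < x $ i \<and> x $ i < 0 $ i + \<epsilon>"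
    define y where "y = vupd x e 0"
    have y0: "y $ i \<ge> 0" for i using box unfolding y_def vupd_def by (auto intro: less_imp_le)
    have ye: "y $ e = 0" unfolding y_def vupd_def by simp
    have "(\<Sum>i\<in>UNIV. y $ i) \<le> (\<Sum>i\<in>(UNIV::'n set). \<epsilon>)"
      by (rule sum_mono) (use box in \<open>auto simp: y_def vupd_def intro: less_imp_le\<close>)
    also have "\<dots> = CARD('n) * \<epsilon>" by simp
    also have "\<dots> \<le> 1" unfolding \<epsilon>_def by (simp add: field_simps)
    finally have ysum: "(\<Sum>i\<in>UNIV. y $ i) \<le> 1" .
    define w where "w l = (if l = j0 then 1 - (\<Sum>i\<in>UNIV. y $ i) else y $ (inv_into UNIV \<sigma> l))" for l
    have w\<sigma>: "w (\<sigma> i) = y $ i" for i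
    proof -
      have "\<sigma> i \<noteq> j0" using \<sigma>J[of i] unfolding J_def by auto
      moreover have "inv_into UNIV \<sigma> (\<sigma> i) = i" using \<sigma> by (simp add: bij_betw_def inv_into_f_f)
      ultimately show ?thesis unfolding w_def by simp
    qed
    have wj: "w j = 0" using w\<sigma>[of e] e ye by simp
    have sumJ: "(\<Sum>l\<in>J. w l *\<^sub>R V l) = (\<Sum>i\<in>UNIV. y $ i *\<^sub>R V (\<sigma> i))"
      using reidx[of "\<lambda>l. w l *\<^sub>R V l"] by (simp add: w\<sigma>)
    have sumJr: "(\<Sum>l\<in>J. w l) = (\<Sum>i\<in>UNIV. y $ i)"
      using reidxr[of w] by (simp add: w\<sigma>)
    have Ay: "A y = (\<Sum>l\<in>{0..CARD('n)}. w l *\<^sub>R V l)"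
    proof -
      have "(\<Sum>l\<in>{0..CARD('n)}. w l *\<^sub>R V l) = w j0 *\<^sub>R V j0 + (\<Sum>l\<in>J. w l *\<^sub>R V l)"
        unfolding J_def using j0 by (subst sum.remove[of _ j0]) auto
      also have "\<dots> = A y"
      proof -
        have Aeq: "A y = V j0 + (\<Sum>i\<in>UNIV. y $ i *\<^sub>R V (\<sigma> i)) - (\<Sum>i\<in>UNIV. y $ i) *\<^sub>R V j0"
          unfolding A_def by (simp add: scaleR_diff_right sum_subtractf scaleR_sum_left)
        have wj0: "w j0 = 1 - (\<Sum>i\<in>UNIV. y $ i)" unfolding w_def by simp
        show ?thesis unfolding sumJ wj0 Aeq by (simp add: scaleR_diff_left algebra_simps)
      qed
      finally show ?thesis by simp
    qed
    have wsum: "(\<Sum>l\<in>{0..CARD('n)}. w l) = 1"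
    proof -
      have "(\<Sum>l\<in>{0..CARD('n)}. w l) = w j0 + (\<Sum>l\<in>J. w l)"
        unfolding J_def using j0 by (subst sum.remove[of _ j0]) auto
      then show ?thesis unfolding sumJr by (simp add: w_def)
    qed
    have wnn: "w l \<ge> 0" for l unfolding w_def using ysum y0 by auto
    have "A y \<in> facet V j"
    proof -
      have "A y = (\<Sum>l\<in>{0..CARD('n)} - {j}. w l *\<^sub>R V l)"
        unfolding Ay by (rule sum.mono_neutral_right) (use wj j in auto)
      moreover have "(\<Sum>l\<in>{0..CARD('n)} - {j}. w l *\<^sub>R V l) \<in> facet V j"
        unfolding facet_def
      proof (rule convex_sum)
        show "finite ({0..CARD('n)} - {j})" by simp
        show "convex (convex hull V ` ({0..CARD('n)} - {j}))" by (rule convex_convex_hull)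
        show "sum w ({0..CARD('n)} - {j}) = 1"
          using wsum wj j by (subst (asm) sum.remove[of _ j]) auto
        show "\<And>i. i \<in> {0..CARD('n)} - {j} \<Longrightarrow> 0 \<le> w i" using wnn by auto
        show "\<And>i. i \<in> {0..CARD('n)} - {j} \<Longrightarrow> V i \<in> convex hull V ` ({0..CARD('n)} - {j})"
          by (rule hull_inc) auto
      qed
      ultimately show ?thesis by simp
    qed
    then show "P (vupd x e 0) = 0" unfolding P_def y_def[symmetric] by (rule pz)
  qed
  define q where "q x = Q (Lam x)" for x
  have "poly_fun (k - 1) q" unfolding q_def by (rule pf_compose[OF Q(1) Lpf])
  moreover have "p x = bary V j x * q x" for x
  proof -
    have "p x = P (Lam x)" unfolding P_def ALam ..
    also have "\<dots> = Lam x $ e * Q (Lam x)" using Q(2)[of "Lam x"] Rz[of "Lam x"] by simp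
    also have "\<dots> = bary V j x * q x" unfolding q_def Lam_def using e by simp
    finally show ?thesis .
  qed
  ultimately show ?thesis by blast
qed

lemma fun_sum_apply: "(\<Sum>i\<in>A. F i) x = (\<Sum>i\<in>A. F i x)"
  by (induction A rule: infinite_finite_induct) auto

lemma trace_scaleR: "trace (c *\<^sub>R (M::real^'n::finite^'n)) = c * trace M"
  unfolding trace_def by (simp add: sum_distrib_left)

lemma trace_dev: "trace (dev (M::real^'n::finite^'n)) = 0"
  unfolding dev_def by (simp add: trace_sub trace_scaleR trace_I)

lemma trace_sum: "trace (\<Sum>p\<in>A. F p :: real^'n::finite^'n) = (\<Sum>p\<in>A. trace (F p))"
  unfolding trace_def by (simp add: sum.swap[of _ UNIV])

lemma outer_mv: "outer a b *v n = (b \<bullet> n) *\<^sub>R a"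
  unfolding outer_def by (simp add: vec_eq_iff matrix_vector_mult_def inner_vec_def sum_distrib_left mult_ac)

lemma dev_mv: "dev M *v n = M *v n - (trace M / real CARD('n)) *\<^sub>R (n::real^'n::finite)"
  unfolding dev_def by (simp add: matrix_vector_mult_diff_rdistrib scaleR_matrix_vector_assoc[symmetric])

lemma tang_dev_outer:
  fixes a b n :: "real^'n::finite"
  assumes "norm n = 1"
  shows "tang_part (dev (outer a b)) n = (b \<bullet> n) *\<^sub>R (a - (a \<bullet> n) *\<^sub>R n)"
proof -
  have nn: "n \<bullet> n = 1" using assms by (simp add: dot_square_norm)
  show ?thesis unfolding tang_part_def dev_mv outer_mv
    by (simp add: inner_diff_right nn algebra_simps inner_commute)
qed

lemma phi_dev_outer:
  fixes a b u w :: "real^'n::finite"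
  shows "u \<bullet> (dev (outer a b) *v w) = (b \<bullet> w) * (u \<bullet> a) - (trace (outer a b) / real CARD('n)) * (u \<bullet> w)"
  unfolding dev_mv outer_mv by (simp add: inner_diff_right)

lemma tang_zero:
  fixes V :: "nat \<Rightarrow> real^'n::finite"
  assumes nd: "nondeg_simplex V" and j: "j \<in> {0..CARD('n)}" and n: "unit_normal V j n"
    and ab: "b \<bullet> bgrad V j = 0 \<or> a = bgrad V j"
  shows "tang_part (dev (outer a b)) n = 0"
proof -
  obtain s where s: "n = s *\<^sub>R bgrad V j" using unit_normal_par[OF nd j n] by blast
  have n1: "norm n = 1" using n unfolding unit_normal_def by simp
  then have nn: "n \<bullet> n = 1" by (simp add: dot_square_norm)
  show ?thesis unfolding tang_dev_outer[OF n1]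
  proof (cases "b \<bullet> bgrad V j = 0")
    case True then show "(b \<bullet> n) *\<^sub>R (a - (a \<bullet> n) *\<^sub>R n) = 0" unfolding s by simp
  next
    case False
    then have a: "a = bgrad V j" using ab by simp
    have "s *\<^sub>R a = n" using s a by simp
    then have "a \<bullet> n * s = 1" using nn by (metis inner_scaleR_left mult.commute)
    then have "(a \<bullet> n) *\<^sub>R n = a" using s a by simp
    then show "(b \<bullet> n) *\<^sub>R (a - (a \<bullet> n) *\<^sub>R n) = 0" by simp
  qed
qed

lemma phi_expand: "u \<bullet> (M *v w) = (\<Sum>r\<in>UNIV. \<Sum>s\<in>UNIV. u$r * M$r$s * w$s)"
  unfolding inner_vec_def matrix_vector_mult_def by (simp add: sum_distrib_left mult_ac)

lemma pf_phi:
  assumes "mpoly_fun k b"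
  shows "poly_fun k (\<lambda>x. u \<bullet> (b x *v w))"
  unfolding phi_expand
proof (intro pf_sum finite)
  fix r s
  have "poly_fun k (\<lambda>x. (u$r * w$s) * b x $ r $ s)" using assms unfolding mpoly_fun_def by (intro pf_scale) simp
  then show "poly_fun k (\<lambda>x. u $ r * b x $ r $ s * w $ s)" by (simp add: mult_ac)
qed

lemma phi_linear_sum:
  fixes M :: "'q \<Rightarrow> real^'n::finite^'n"
  shows "u \<bullet> ((\<Sum>p\<in>A. c p *\<^sub>R M p) *v w) = (\<Sum>p\<in>A. c p * (u \<bullet> (M p *v w)))"
proof (induction A rule: infinite_finite_induct)
  case (insert x F) then show ?case
    by (simp add: matrix_vector_mult_add_rdistrib inner_add_right scaleR_matrix_vector_assoc[symmetric])
qed auto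

lemma Bub_intro:
  fixes \<tau> :: "real^'n::finite \<Rightarrow> real^'n^'n"
  assumes "mpoly_fun k \<tau>" "\<And>x. trace (\<tau> x) = 0"
    "\<And>i n x. i \<in> {0..CARD('n)} \<Longrightarrow> unit_normal V i n \<Longrightarrow> x \<in> facet V i \<Longrightarrow> tang_part (\<tau> x) n = 0"
  shows "\<tau> \<in> Bub_sp k V"
proof -
  have "vpoly_fun (k - 1) (\<lambda>x::real^'n. 0::real^'n)" unfolding vpoly_fun_def by (simp add: pf_zero)
  then show ?thesis unfolding Bub_sp_def Sigma_sp_def using assms by fastforce
qed

lemma Bub_D:
  assumes "\<tau> \<in> Bub_sp k V"
  shows "mpoly_fun k \<tau>" "\<And>x. trace (\<tau> x) = 0"
    "\<And>i n x. i \<in> {0..CARD('n::finite)} \<Longrightarrow> unit_normal V i n \<Longrightarrow> x \<in> facet V i \<Longrightarrow> tang_part (\<tau> x) n = (0::real^'n)"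
  using assms unfolding Bub_sp_def Sigma_sp_def by auto

lemma tang_scaleR: "tang_part (c *\<^sub>R M) n = c *\<^sub>R tang_part M n"
  unfolding tang_part_def by (simp add: scaleR_matrix_vector_assoc[symmetric] algebra_simps)

lemma bub_term:
  fixes V :: "nat \<Rightarrow> real^'n::finite" and S :: "real^'n^'n"
  assumes nd: "nondeg_simplex V" and i: "i \<in> {0..CARD('n)}" and k: "k \<ge> 1"
    and mu: "poly_fun (k - 1) \<mu>" and trS: "trace S = 0"
    and tS: "\<And>j n. j \<in> {0..CARD('n)} \<Longrightarrow> j \<noteq> i \<Longrightarrow> unit_normal V j n \<Longrightarrow> tang_part S n = 0"
  shows "(\<lambda>x. (\<mu> x * bary V i x) *\<^sub>R S) \<in> Bub_sp k V"
proof (rule Bub_intro)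
  show "mpoly_fun k (\<lambda>x. (\<mu> x * bary V i x) *\<^sub>R S)" unfolding mpoly_fun_def
  proof (intro allI)
    fix r s
    have "poly_fun (k - 1 + 1) (\<lambda>x. \<mu> x * bary V i x)" by (rule pf_mult[OF mu pf_bary])
    then have "poly_fun k (\<lambda>x. S$r$s * (\<mu> x * bary V i x))" using k by (intro pf_scale) simp
    then show "poly_fun k (\<lambda>x. ((\<mu> x * bary V i x) *\<^sub>R S) $ r $ s)" by (simp add: mult_ac)
  qed
  show "trace ((\<mu> x * bary V i x) *\<^sub>R S) = 0" for x by (simp add: trace_scaleR trS)
  fix j n x assume j: "j \<in> {0..CARD('n)}" and n: "unit_normal V j n" and x: "x \<in> facet V j"
  show "tang_part ((\<mu> x * bary V i x) *\<^sub>R S) n = 0"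
  proof (cases "j = i")
    case True then show ?thesis using bary_facet[OF nd j x] by (simp add: tang_part_def)
  next
    case False then show ?thesis using tS[OF j False n] by (simp add: tang_scaleR)
  qed
qed

lemma bub_phi_facet:
  fixes V :: "nat \<Rightarrow> real^'n::finite"
  assumes nd: "nondeg_simplex V" and b: "b \<in> Bub_sp k V" and j: "j \<in> {0..CARD('n)}"
    and x: "x \<in> facet V j" and u: "u \<bullet> bgrad V j = 0"
  shows "u \<bullet> (b x *v bgrad V j) = 0"
proof -
  let ?g = "bgrad V j"
  have g0: "norm ?g \<noteq> 0" using bgrad_nz[OF nd j] by simp
  define n where "n = (1 / norm ?g) *\<^sub>R ?g"
  have "unit_normal V j n" unfolding unit_normal_def n_def using g0
    by (auto simp: bgrad_diff[OF nd j])
  then have "tang_part (b x) n = 0" using Bub_D(3)[OF b j _ x] by blast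
  then have bn: "b x *v n = (n \<bullet> (b x *v n)) *\<^sub>R n" unfolding tang_part_def by simp
  have g: "?g = norm ?g *\<^sub>R n" unfolding n_def using g0 by simp
  have un: "u \<bullet> n = 0" unfolding n_def using u by simp
  have "u \<bullet> (b x *v ?g) = norm ?g * (u \<bullet> (b x *v n))"
    by (subst g) (simp add: matrix_vector_mult_scaleR)
  also have "u \<bullet> (b x *v n) = 0" by (subst bn) (simp add: un)
  finally show ?thesis by simp
qed

lemma box_bary:
  fixes V :: "nat \<Rightarrow> real^'n::finite"
  assumes nd: "nondeg_simplex V" and i: "i \<in> {0..CARD('n)}"
  shows "\<exists>\<epsilon>>0. \<forall>x. (\<forall>r. V i $ r < x $ r \<and> x $ r < V i $ r + \<epsilon>) \<longrightarrow> bary V i x \<noteq> 0"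
proof -
  let ?g = "bgrad V i"
  define G where "G = (\<Sum>r\<in>UNIV. \<bar>?g $ r\<bar>)"
  have G0: "G \<ge> 0" unfolding G_def by (simp add: sum_nonneg)
  define \<epsilon> where "\<epsilon> = 1 / (G + 1)"
  have \<epsilon>: "\<epsilon> > 0" unfolding \<epsilon>_def using G0 by simp
  have "bary V i x \<noteq> 0" if x: "\<forall>r. V i $ r < x $ r \<and> x $ r < V i $ r + \<epsilon>" for x
  proof -
    have bx: "bary V i x = 1 + ?g \<bullet> (x - V i)"
      using bary_vertex[OF nd i i] unfolding bary_alt by (simp add: inner_diff_right)
    have "\<bar>?g \<bullet> (x - V i)\<bar> \<le> (\<Sum>r\<in>UNIV. \<bar>?g $ r * (x - V i) $ r\<bar>)"
    proof -
      have "?g \<bullet> (x - V i) = (\<Sum>r\<in>UNIV. ?g $ r * (x - V i) $ r)" by (simp add: inner_vec_def)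
      then show ?thesis by (simp add: sum_abs)
    qed
    also have "\<dots> \<le> (\<Sum>r\<in>UNIV. \<bar>?g $ r\<bar> * \<epsilon>)"
    proof (rule sum_mono)
      fix r
      have "\<bar>(x - V i) $ r\<bar> \<le> \<epsilon>" using x[rule_format, of r] by auto
      then show "\<bar>?g $ r * (x - V i) $ r\<bar> \<le> \<bar>?g $ r\<bar> * \<epsilon>"
        unfolding abs_mult by (rule mult_left_mono) simp
    qed
    also have "\<dots> = G * \<epsilon>" unfolding G_def by (simp add: sum_distrib_right)
    also have "\<dots> < 1" unfolding \<epsilon>_def using G0 by (simp add: field_simps)
    finally show ?thesis unfolding bx by linarith
  qed
  with \<epsilon> show ?thesis by blast
qed

lemma indep_key:
  fixes V :: "nat \<Rightarrow> real^'n::finite" and S :: "'q \<Rightarrow> real^'n^'n"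
  assumes nd: "nondeg_simplex V" and fQ: "finite Q" and \<iota>Q: "\<And>p. p \<in> Q \<Longrightarrow> \<iota> p \<in> {0..CARD('n)}"
    and offdiag: "\<And>p p'. p \<in> Q \<Longrightarrow> p' \<in> Q \<Longrightarrow> p \<noteq> p' \<Longrightarrow> u p \<bullet> (S p' *v bgrad V (\<iota> p)) = 0"
    and diag: "\<And>p. p \<in> Q \<Longrightarrow> u p \<bullet> (S p *v bgrad V (\<iota> p)) \<noteq> 0"
    and z: "\<And>x. (\<Sum>p\<in>Q. ((\<Sum>\<alpha>\<in>Mset m. w p \<alpha> * mon \<alpha> x) * bary V (\<iota> p) x) *\<^sub>R S p) = 0"
    and p0: "p0 \<in> Q" and a0: "\<alpha>0 \<in> Mset m"
  shows "w p0 \<alpha>0 = 0"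
proof -
  let ?i = "\<iota> p0"
  define P where "P x = (\<Sum>\<alpha>\<in>Mset m. w p0 \<alpha> * mon \<alpha> x)" for x
  have Pl: "P x * bary V ?i x = 0" for x
  proof -
    have "0 = u p0 \<bullet> ((\<Sum>p\<in>Q. ((\<Sum>\<alpha>\<in>Mset m. w p \<alpha> * mon \<alpha> x) * bary V (\<iota> p) x) *\<^sub>R S p) *v bgrad V ?i)"
      using z[of x] by simp
    also have "\<dots> = (\<Sum>p\<in>Q. ((\<Sum>\<alpha>\<in>Mset m. w p \<alpha> * mon \<alpha> x) * bary V (\<iota> p) x) * (u p0 \<bullet> (S p *v bgrad V ?i)))"
      by (rule phi_linear_sum)
    also have "\<dots> = (\<Sum>p\<in>Q. if p = p0 then (P x * bary V ?i x) * (u p0 \<bullet> (S p0 *v bgrad V ?i)) else 0)"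
    proof (rule sum.cong[OF refl])
      fix p assume p: "p \<in> Q"
      show "((\<Sum>\<alpha>\<in>Mset m. w p \<alpha> * mon \<alpha> x) * bary V (\<iota> p) x) * (u p0 \<bullet> (S p *v bgrad V ?i))
          = (if p = p0 then (P x * bary V ?i x) * (u p0 \<bullet> (S p0 *v bgrad V ?i)) else 0)"
      proof (cases "p = p0")
        case True then show ?thesis by (simp add: P_def)
      next
        case False then show ?thesis using offdiag[OF p0 p] by simp
      qed
    qed
    also have "\<dots> = (P x * bary V ?i x) * (u p0 \<bullet> (S p0 *v bgrad V ?i))"
      using p0 fQ by (simp add: sum.delta')
    finally have "(P x * bary V ?i x) * (u p0 \<bullet> (S p0 *v bgrad V ?i)) = 0" by simp
    then show ?thesis using diag[OF p0] by simp
  qed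
  have Ppf: "poly_fun m P" unfolding P_def by (intro pf_sum pf_scale pf_monomial) auto
  obtain \<epsilon> where \<epsilon>: "\<epsilon> > 0" "\<And>x. (\<forall>r. V ?i $ r < x $ r \<and> x $ r < V ?i $ r + \<epsilon>) \<Longrightarrow> bary V ?i x \<noteq> 0"
    using box_bary[OF nd \<iota>Q[OF p0]] by blast
  have "P y = 0" for y
  proof (rule pf_zero_box[OF Ppf \<epsilon>(1)])
    fix x assume "\<forall>r. V ?i $ r < x $ r \<and> x $ r < V ?i $ r + \<epsilon>"
    then have "bary V ?i x \<noteq> 0" by (rule \<epsilon>(2))
    then show "P x = 0" using Pl[of x] by simp
  qed
  then show ?thesis using pf_zero_coeffs[OF finite_Mset _ a0, of "w p0"] unfolding P_def by blast
qed

lemma FS_vs: "vector_space (\<lambda>(c::real) (f::'a \<Rightarrow> 'b::real_vector) x. c *\<^sub>R f x)"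
  by unfold_locales (auto simp: fun_eq_iff algebra_simps)

lemma bubble_repr:
  fixes V :: "nat \<Rightarrow> real^'n::finite" and Q :: "'q set" and \<iota> :: "'q \<Rightarrow> nat"
    and S :: "'q \<Rightarrow> real^'n^'n" and u :: "'q \<Rightarrow> real^'n"
  assumes nd: "nondeg_simplex V" and k: "k \<ge> 1" and fQ: "finite Q" and \<iota>Q: "\<And>p. p \<in> Q \<Longrightarrow> \<iota> p \<in> {0..CARD('n)}"
    and offdiag: "\<And>p p'. p \<in> Q \<Longrightarrow> p' \<in> Q \<Longrightarrow> p \<noteq> p' \<Longrightarrow> u p \<bullet> (S p' *v bgrad V (\<iota> p)) = 0"
    and diag: "\<And>p. p \<in> Q \<Longrightarrow> u p \<bullet> (S p *v bgrad V (\<iota> p)) \<noteq> 0"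
    and spanD: "\<And>N. trace N = 0 \<Longrightarrow> (\<And>p. p \<in> Q \<Longrightarrow> u p \<bullet> (N *v bgrad V (\<iota> p)) = 0) \<Longrightarrow> N = 0"
    and uperp: "\<And>p. p \<in> Q \<Longrightarrow> u p \<bullet> bgrad V (\<iota> p) = 0"
    and trS: "\<And>p. p \<in> Q \<Longrightarrow> trace (S p) = 0"
    and b: "b \<in> Bub_sp k V"
  shows "\<exists>\<mu>. (\<forall>p\<in>Q. poly_fun (k - 1) (\<mu> p)) \<and> b = (\<lambda>x. \<Sum>p\<in>Q. (\<mu> p x * bary V (\<iota> p) x) *\<^sub>R S p)"
proof -
  define \<phi> where "\<phi> p M = u p \<bullet> (M *v bgrad V (\<iota> p))" for p M
  have ex: "\<exists>q. poly_fun (k - 1) q \<and> (\<forall>x. \<phi> p (b x) / \<phi> p (S p) = bary V (\<iota> p) x * q x)" if p: "p \<in> Q" for p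
  proof (rule division[OF nd \<iota>Q[OF p]])
    have "poly_fun k (\<lambda>x. (1 / \<phi> p (S p)) * \<phi> p (b x))"
      unfolding \<phi>_def by (intro pf_scale pf_phi Bub_D(1)[OF b])
    then show "poly_fun k (\<lambda>x. \<phi> p (b x) / \<phi> p (S p))" by simp
  next
    fix x assume "x \<in> facet V (\<iota> p)"
    then show "\<phi> p (b x) / \<phi> p (S p) = 0"
      unfolding \<phi>_def using bub_phi_facet[OF nd b \<iota>Q[OF p] _ uperp[OF p]] by simp
  qed
  then obtain \<mu> where \<mu>: "\<And>p. p \<in> Q \<Longrightarrow> poly_fun (k - 1) (\<mu> p)"
    "\<And>p x. p \<in> Q \<Longrightarrow> \<phi> p (b x) / \<phi> p (S p) = bary V (\<iota> p) x * \<mu> p x"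
    by metis
  have "b x = (\<Sum>p\<in>Q. (\<mu> p x * bary V (\<iota> p) x) *\<^sub>R S p)" for x
  proof -
    define N where "N = b x - (\<Sum>p\<in>Q. (\<mu> p x * bary V (\<iota> p) x) *\<^sub>R S p)"
    have "trace N = 0" unfolding N_def
      by (simp add: trace_sub trace_sum trace_scaleR trS Bub_D(2)[OF b])
    moreover have "u p0 \<bullet> (N *v bgrad V (\<iota> p0)) = 0" if p0: "p0 \<in> Q" for p0
    proof -
      have "u p0 \<bullet> (N *v bgrad V (\<iota> p0)) = \<phi> p0 (b x) - (\<Sum>p\<in>Q. (\<mu> p x * bary V (\<iota> p) x) * \<phi> p0 (S p))"
        unfolding N_def \<phi>_def by (simp add: matrix_vector_mult_diff_rdistrib inner_diff_right phi_linear_sum)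
      also have "(\<Sum>p\<in>Q. (\<mu> p x * bary V (\<iota> p) x) * \<phi> p0 (S p)) = (\<Sum>p\<in>Q. if p = p0 then (\<mu> p0 x * bary V (\<iota> p0) x) * \<phi> p0 (S p0) else 0)"
      proof (rule sum.cong[OF refl])
        fix p assume p: "p \<in> Q"
        show "(\<mu> p x * bary V (\<iota> p) x) * \<phi> p0 (S p) = (if p = p0 then (\<mu> p0 x * bary V (\<iota> p0) x) * \<phi> p0 (S p0) else 0)"
        proof (cases "p = p0")
          case False then show ?thesis using offdiag[OF p0 p] unfolding \<phi>_def by auto
        qed simp
      qed
      also have "\<dots> = (\<mu> p0 x * bary V (\<iota> p0) x) * \<phi> p0 (S p0)" using p0 fQ by (simp add: sum.delta')
      also have "\<dots> = \<phi> p0 (b x)" using \<mu>(2)[OF p0, of x] diag[OF p0] unfolding \<phi>_def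
        by (simp add: field_simps)
      finally show ?thesis by simp
    qed
    ultimately have "N = 0" by (rule spanD)
    then show ?thesis unfolding N_def by simp
  qed
  then show ?thesis using \<mu>(1) by (intro exI[of _ \<mu>]) auto
qed


lemma bubble_dim:
  fixes V :: "nat \<Rightarrow> real^'n::finite" and Q :: "'q set" and \<iota> :: "'q \<Rightarrow> nat"
    and S :: "'q \<Rightarrow> real^'n^'n" and u :: "'q \<Rightarrow> real^'n"
  assumes nd: "nondeg_simplex V" and k: "k \<ge> 1" and fQ: "finite Q" and \<iota>Q: "\<And>p. p \<in> Q \<Longrightarrow> \<iota> p \<in> {0..CARD('n)}"
    and offdiag: "\<And>p p'. p \<in> Q \<Longrightarrow> p' \<in> Q \<Longrightarrow> p \<noteq> p' \<Longrightarrow> u p \<bullet> (S p' *v bgrad V (\<iota> p)) = 0"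
    and diag: "\<And>p. p \<in> Q \<Longrightarrow> u p \<bullet> (S p *v bgrad V (\<iota> p)) \<noteq> 0"
    and spanD: "\<And>N. trace N = 0 \<Longrightarrow> (\<And>p. p \<in> Q \<Longrightarrow> u p \<bullet> (N *v bgrad V (\<iota> p)) = 0) \<Longrightarrow> N = 0"
    and uperp: "\<And>p. p \<in> Q \<Longrightarrow> u p \<bullet> bgrad V (\<iota> p) = 0"
    and trS: "\<And>p. p \<in> Q \<Longrightarrow> trace (S p) = 0"
    and tangS: "\<And>p j n. p \<in> Q \<Longrightarrow> j \<in> {0..CARD('n)} \<Longrightarrow> j \<noteq> \<iota> p \<Longrightarrow> unit_normal V j n \<Longrightarrow> tang_part (S p) n = 0"
  shows "fdim (Bub_sp k V) = card Q * card (Mset (k - 1) :: ('n \<Rightarrow> nat) set)"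
proof -
  interpret FS: vector_space "\<lambda>(c::real) (f::real^'n \<Rightarrow> real^'n^'n) x. c *\<^sub>R f x" by (rule FS_vs)
  define M where "M = (Mset (k - 1) :: ('n \<Rightarrow> nat) set)"
  have fM: "finite M" unfolding M_def by simp
  define f where "f c = (\<lambda>x. (mon (snd c) x * bary V (\<iota> (fst c)) x) *\<^sub>R S (fst c))" for c :: "'q \<times> ('n \<Rightarrow> nat)"
  have key: "\<forall>c\<in>Q \<times> M. w c = 0" if z: "\<And>x. (\<Sum>c\<in>Q \<times> M. w c *\<^sub>R f c x) = 0" for w
  proof
    fix c assume c: "c \<in> Q \<times> M"
    have z': "(\<Sum>p\<in>Q. ((\<Sum>\<alpha>\<in>Mset (k - 1). w (p, \<alpha>) * mon \<alpha> x) * bary V (\<iota> p) x) *\<^sub>R S p) = 0" for x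
    proof -
      have "(\<Sum>p\<in>Q. ((\<Sum>\<alpha>\<in>Mset (k - 1). w (p, \<alpha>) * mon \<alpha> x) * bary V (\<iota> p) x) *\<^sub>R S p)
          = (\<Sum>p\<in>Q. \<Sum>\<alpha>\<in>M. w (p, \<alpha>) *\<^sub>R f (p, \<alpha>) x)"
        unfolding f_def M_def by (simp add: sum_distrib_right scaleR_sum_left mult.assoc)
      also have "\<dots> = (\<Sum>c\<in>Q \<times> M. w c *\<^sub>R f c x)"
        by (subst sum.cartesian_product) (rule sum.cong; auto)
      finally show ?thesis using z by simp
    qed
    obtain p \<alpha> where "c = (p, \<alpha>)" "p \<in> Q" "\<alpha> \<in> Mset (k - 1)" using c unfolding M_def by auto
    then show "w c = 0"
      using indep_key[OF nd fQ \<iota>Q offdiag diag z', of p \<alpha>] by simp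
  qed
  have inj: "inj_on f (Q \<times> M)"
  proof (rule inj_onI, rule ccontr)
    fix a b assume a: "a \<in> Q \<times> M" and b: "b \<in> Q \<times> M" and fab: "f a = f b" and ab: "a \<noteq> b"
    define w where "w c = (if c = a then 1 else 0) - (if c = b then 1 else (0::real))" for c
    have "(\<Sum>c\<in>Q \<times> M. w c *\<^sub>R f c x) = 0" for x
    proof -
      have "(\<Sum>c\<in>Q \<times> M. w c *\<^sub>R f c x) = (\<Sum>c\<in>Q \<times> M. (if c = a then f c x else 0)) - (\<Sum>c\<in>Q \<times> M. (if c = b then f c x else 0))"
      proof -
        have "w c *\<^sub>R f c x = (if c = a then f c x else 0) - (if c = b then f c x else 0)" for c
          unfolding w_def by (simp add: scaleR_diff_left)
        then show ?thesis by (simp add: sum_subtractf)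
      qed
      also have "\<dots> = f a x - f b x" using a b fQ fM by (simp add: sum.delta')
      finally show ?thesis using fab by simp
    qed
    then have "w a = 0" using key a by blast
    then show False unfolding w_def using ab by simp
  qed
  define B where "B = f ` (Q \<times> M)"
  have fB: "finite B" unfolding B_def using fQ fM by simp
  have BBub: "B \<subseteq> Bub_sp k V"
  proof
    fix g assume "g \<in> B"
    then obtain p \<alpha> where p: "p \<in> Q" "\<alpha> \<in> M" and g: "g = f (p, \<alpha>)" unfolding B_def by auto
    show "g \<in> Bub_sp k V" unfolding g f_def fst_conv snd_conv
      by (rule bub_term[OF nd \<iota>Q[OF p(1)] k pf_monomial trS[OF p(1)] tangS[OF p(1)]])
        (use p(2) in \<open>simp_all add: M_def\<close>)
  qed
  have span: "Bub_sp k V \<subseteq> FS.span B"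
  proof
    fix b assume b: "b \<in> Bub_sp k V"
    obtain \<mu> where \<mu>: "\<forall>p\<in>Q. poly_fun (k - 1) (\<mu> p)" "b = (\<lambda>x. \<Sum>p\<in>Q. (\<mu> p x * bary V (\<iota> p) x) *\<^sub>R S p)"
      using bubble_repr[where V=V and Q=Q and \<iota>=\<iota> and S=S and u=u and k=k and b=b, OF nd k fQ \<iota>Q offdiag diag spanD uperp trS b] by blast
    have "\<exists>cf. \<mu> p = (\<lambda>x. \<Sum>\<alpha>\<in>M. cf \<alpha> * mon \<alpha> x)" if "p \<in> Q" for p
      using \<mu>(1) that unfolding poly_fun_iff M_def by blast
    then obtain cf where cf: "\<And>p. p \<in> Q \<Longrightarrow> \<mu> p = (\<lambda>x. \<Sum>\<alpha>\<in>M. cf p \<alpha> * mon \<alpha> x)" by metis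
    have "b = (\<Sum>c\<in>Q \<times> M. (\<lambda>x. cf (fst c) (snd c) *\<^sub>R f c x))"
    proof
      fix x
      have "b x = (\<Sum>p\<in>Q. ((\<Sum>\<alpha>\<in>M. cf p \<alpha> * mon \<alpha> x) * bary V (\<iota> p) x) *\<^sub>R S p)"
        unfolding \<mu>(2) by (rule sum.cong) (simp_all add: cf)
      also have "\<dots> = (\<Sum>p\<in>Q. \<Sum>\<alpha>\<in>M. cf p \<alpha> *\<^sub>R f (p, \<alpha>) x)"
        unfolding f_def by (simp add: sum_distrib_right scaleR_sum_left mult.assoc)
      also have "\<dots> = (\<Sum>c\<in>Q \<times> M. cf (fst c) (snd c) *\<^sub>R f c x)"
        by (subst sum.cartesian_product) (rule sum.cong; auto)
      finally show "b x = (\<Sum>c\<in>Q \<times> M. (\<lambda>x. cf (fst c) (snd c) *\<^sub>R f c x)) x"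
        by (simp add: fun_sum_apply)
    qed
    also have "\<dots> \<in> FS.span B"
    proof (rule FS.span_sum)
      fix c assume "c \<in> Q \<times> M"
      then have "f c \<in> FS.span B" unfolding B_def by (intro FS.span_base) auto
      then show "(\<lambda>x. cf (fst c) (snd c) *\<^sub>R f c x) \<in> FS.span B" by (rule FS.span_scale)
    qed
    finally show "b \<in> FS.span B" .
  qed
  have indep: "FS.independent B"
  proof -
    have "\<not> FS.dependent B"
    proof
      assume "FS.dependent B"
      then obtain w where w: "\<exists>v\<in>B. w v \<noteq> 0" "(\<Sum>v\<in>B. (\<lambda>x. w v *\<^sub>R v x)) = 0"
        using FS.dependent_finite[OF fB] by blast
      have "(\<Sum>c\<in>Q \<times> M. (w \<circ> f) c *\<^sub>R f c x) = 0" for x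
      proof -
        have "(\<Sum>c\<in>Q \<times> M. (w \<circ> f) c *\<^sub>R f c x) = (\<Sum>v\<in>B. w v *\<^sub>R v x)"
          unfolding B_def by (subst sum.reindex[OF inj]) simp
        also have "\<dots> = (\<Sum>v\<in>B. (\<lambda>x. w v *\<^sub>R v x)) x" by (simp add: fun_sum_apply)
        also have "\<dots> = 0" using w(2) by simp
        finally show ?thesis .
      qed
      then have "\<forall>c\<in>Q \<times> M. w (f c) = 0" using key[of "w \<circ> f"] by simp
      then show False using w(1) unfolding B_def by auto
    qed
    then show ?thesis by simp
  qed
  have "FS.dim (Bub_sp k V) = card B"
    by (rule FS.dim_unique[OF BBub span indep refl])
  also have "card B = card Q * card M" unfolding B_def using card_image[OF inj] by (simp add: card_cartesian_product)
  finally show ?thesis unfolding fdim_def M_def .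
qed

lemma mv_sum: "(N::real^'n::finite^'m::finite) *v (\<Sum>i\<in>A. f i) = (\<Sum>i\<in>A. N *v f i)"
  by (induction A rule: infinite_finite_induct) (auto simp: matrix_vector_right_distrib)

lemma mv_axis: "((N::real^'n::finite^'m::finite) *v axis s 1) $ r = N $ r $ s"
  unfolding matrix_vector_mult_def axis_def by (simp add: if_distrib cong: if_cong)

lemma eigen_zero:
  fixes V :: "nat \<Rightarrow> real^'n::finite" and N :: "real^'n^'n"
  assumes nd: "nondeg_simplex V" and ev: "\<And>j. j \<in> {0..CARD('n)} \<Longrightarrow> \<exists>\<nu>. N *v bgrad V j = \<nu> *\<^sub>R bgrad V j"
    and tr: "trace N = 0"
  shows "N = 0"
proof -
  obtain \<nu> where \<nu>: "\<And>j. j \<in> {0..CARD('n)} \<Longrightarrow> N *v bgrad V j = \<nu> j *\<^sub>R bgrad V j" using ev by metis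
  have I0: "0 \<in> {0..CARD('n)}" by simp
  have s: "(\<Sum>j\<in>{0..CARD('n)}. \<nu> j *\<^sub>R bgrad V j) = 0"
  proof -
    have "(\<Sum>j\<in>{0..CARD('n)}. \<nu> j *\<^sub>R bgrad V j) = (\<Sum>j\<in>{0..CARD('n)}. N *v bgrad V j)"
      by (rule sum.cong) (simp_all add: \<nu>)
    also have "\<dots> = N *v (\<Sum>j\<in>{0..CARD('n)}. bgrad V j)" by (simp add: mv_sum)
    also have "\<dots> = 0" using sum_bary_coeffs(1)[OF nd] by simp
    finally show ?thesis .
  qed
  have eq: "\<nu> m = \<nu> 0" if m: "m \<in> {0..CARD('n)}" for m
  proof (cases "m = 0")
    case False
    have "0 = (\<Sum>j\<in>{0..CARD('n)}. \<nu> j *\<^sub>R bgrad V j) \<bullet> (V m - V 0)" using s by simp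
    also have "\<dots> = (\<Sum>j\<in>{0..CARD('n)}. \<nu> j * ((if m = j then 1 else 0) - (if 0 = j then 1 else 0)))"
      by (simp add: inner_sum_left bgrad_diff[OF nd _ m I0])
    also have "\<dots> = (\<Sum>j\<in>{0..CARD('n)}. (if m = j then \<nu> j else 0)) - (\<Sum>j\<in>{0..CARD('n)}. (if 0 = j then \<nu> j else 0))"
    proof -
      have "\<nu> j * ((if m = j then 1 else 0) - (if 0 = j then 1 else 0)) = (if m = j then \<nu> j else 0) - (if 0 = j then \<nu> j else 0)" for j
        by simp
      then show ?thesis by (simp only: sum_subtractf)
    qed
    also have "\<dots> = \<nu> m - \<nu> 0" using m by (simp add: sum.delta)
    finally show ?thesis by simp
  qed simp
  have Ne: "N *v e = \<nu> 0 *\<^sub>R e" for e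
  proof -
    have "N *v e = N *v (\<Sum>i\<in>{0..CARD('n)}. (e \<bullet> V i) *\<^sub>R bgrad V i)" using expansion[OF nd, of e] by simp
    also have "\<dots> = (\<Sum>i\<in>{0..CARD('n)}. (e \<bullet> V i) *\<^sub>R (\<nu> 0 *\<^sub>R bgrad V i))"
      unfolding mv_sum
    proof (rule sum.cong[OF refl])
      fix i assume i: "i \<in> {0..CARD('n)}"
      show "N *v ((e \<bullet> V i) *\<^sub>R bgrad V i) = (e \<bullet> V i) *\<^sub>R (\<nu> 0 *\<^sub>R bgrad V i)"
        using \<nu>[OF i] eq[OF i] by (simp add: matrix_vector_mult_scaleR)
    qed
    also have "\<dots> = \<nu> 0 *\<^sub>R (\<Sum>i\<in>{0..CARD('n)}. (e \<bullet> V i) *\<^sub>R bgrad V i)"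
      by (simp add: scaleR_sum_right mult.commute)
    also have "\<dots> = \<nu> 0 *\<^sub>R e" using expansion[OF nd, of e] by simp
    finally show ?thesis .
  qed
  have Nrs: "N $ r $ s = (if r = s then \<nu> 0 else 0)" for r s
  proof -
    have "N $ r $ s = (\<nu> 0 *\<^sub>R axis s 1) $ r" using mv_axis[of N s r] Ne[of "axis s 1"] by simp
    then show ?thesis by (cases "r = s") (simp_all add: axis_def)
  qed
  have "trace N = \<nu> 0 * CARD('n)" unfolding trace_def by (simp add: Nrs)
  then have "\<nu> 0 = 0" using tr by simp
  then show ?thesis using Nrs by (simp add: vec_eq_iff)
qed

lemma par_generic:
  fixes V :: "nat \<Rightarrow> real^'n::finite"
  assumes nd: "nondeg_simplex V" and j: "j \<in> {0..CARD('n)}" and l: "l \<in> {0..CARD('n)}" "l \<noteq> j"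
    and T: "\<And>i. i \<in> {0..CARD('n)} \<Longrightarrow> i \<noteq> j \<Longrightarrow> i \<noteq> l \<Longrightarrow>
       \<exists>t. t \<bullet> w = 0 \<and> t \<bullet> bgrad V i \<noteq> 0 \<and> (\<forall>m\<in>{0..CARD('n)}. m \<noteq> l \<longrightarrow> m \<noteq> i \<longrightarrow> t \<bullet> bgrad V m = 0)"
  shows "\<exists>\<nu>. w = \<nu> *\<^sub>R bgrad V j"
proof -
  define c where "c m = w \<bullet> (V m - V l)" for m
  have w: "w = (\<Sum>m\<in>{0..CARD('n)} - {l}. c m *\<^sub>R bgrad V m)" unfolding c_def by (rule expansion_base[OF nd l(1)])
  have c0: "c i = 0" if i: "i \<in> {0..CARD('n)}" "i \<noteq> j" "i \<noteq> l" for i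
  proof -
    obtain t where t: "t \<bullet> w = 0" "t \<bullet> bgrad V i \<noteq> 0"
      "\<And>m. m \<in> {0..CARD('n)} \<Longrightarrow> m \<noteq> l \<Longrightarrow> m \<noteq> i \<Longrightarrow> t \<bullet> bgrad V m = 0" using T[OF i] by blast
    have "0 = t \<bullet> (\<Sum>m\<in>{0..CARD('n)} - {l}. c m *\<^sub>R bgrad V m)" using t(1) w by simp
    also have "\<dots> = (\<Sum>m\<in>{0..CARD('n)} - {l}. c m * (t \<bullet> bgrad V m))"
      by (simp add: inner_sum_right)
    also have "\<dots> = (\<Sum>m\<in>{0..CARD('n)} - {l}. if m = i then c m * (t \<bullet> bgrad V m) else 0)"
      by (rule sum.cong) (auto simp: t(3))
    also have "\<dots> = c i * (t \<bullet> bgrad V i)" using i by (simp add: sum.delta')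
    finally show ?thesis using t(2) by simp
  qed
  have "w = (\<Sum>m\<in>{0..CARD('n)} - {l}. if m = j then c m *\<^sub>R bgrad V m else 0)"
    unfolding w by (rule sum.cong) (auto simp: c0)
  also have "\<dots> = c j *\<^sub>R bgrad V j" using j l by (simp add: sum.delta')
  finally show ?thesis by blast
qed

lemma two_eq: "Suc (Suc 0) = 2" by simp
lemma three_eq: "Suc (Suc (Suc 0)) = 3" by simp

lemma curl_self: "curl2 g \<bullet> g = 0"
  unfolding curl2_def by (simp add: inner_vec_def sum_2)

lemma curl_binet: "(curl2 g \<bullet> h) * (curl2 a \<bullet> b) = (g \<bullet> a) * (h \<bullet> b) - (g \<bullet> b) * (h \<bullet> a)"
  unfolding curl2_def by (simp add: inner_vec_def sum_2 algebra_simps)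

lemma card2: "CARD(2) = 2" by simp

lemma curl_nz:
  fixes V :: "nat \<Rightarrow> real^2"
  assumes nd: "nondeg_simplex V" and a: "a \<in> {0..2}" and b: "b \<in> {0..2}" and ab: "a \<noteq> b"
  shows "curl2 (bgrad V a) \<bullet> bgrad V b \<noteq> 0"
proof -
  define l where "l = 3 - a - b"
  have ha: "a = 0 \<or> a = 1 \<or> a = 2" and hb: "b = 0 \<or> b = 1 \<or> b = 2" using a b by auto
  have l: "l \<in> {0..2}" "l \<noteq> a" "l \<noteq> b" unfolding l_def using ha hb ab by (elim disjE; simp add: two_eq)+
  have I: "{0..CARD(2)} = {0..2::nat}" by simp
  have "(curl2 (bgrad V a) \<bullet> bgrad V b) * (curl2 (V a - V l) \<bullet> (V b - V l)) = 1"
    unfolding curl_binet using a b l ab bgrad_diff[OF nd, unfolded I] by simp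
  then show ?thesis by auto
qed



lemma three_cases: "p \<in> {0..2::nat} \<Longrightarrow> p = 0 \<or> p = 1 \<or> p = 2" by auto
lemma three_cases': "p \<in> {0..CARD(2)} \<Longrightarrow> p = 0 \<or> p = 1 \<or> p = 2" by auto

lemma main2:
  fixes V :: "nat \<Rightarrow> real^2"
  assumes nd: "nondeg_simplex V" and k: "k \<ge> 1"
  shows "(\<forall>b\<in>Bub_sp k V. \<exists>\<mu>. (\<forall>i\<in>{0..2}. poly_fun (k - 1) (\<mu> i)) \<and>
            b = (\<lambda>x. \<Sum>i\<in>{0..2}. (\<mu> i x * bary V i x) *\<^sub>R S2 V i))"
    "fdim (Bub_sp k V) = 3 * card (Mset (k - 1) :: (2 \<Rightarrow> nat) set)"
proof -
  let ?Q = "{0..2::nat}"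
  let ?u = "\<lambda>p. curl2 (bgrad V p)"
  have I: "{0..CARD(2)} = {0..2::nat}" by simp
  have fQ: "finite ?Q" by simp
  have \<iota>Q: "\<And>p. p \<in> ?Q \<Longrightarrow> (\<lambda>p. p) p \<in> {0..CARD(2)}" by simp
  have phi: "?u p \<bullet> (S2 V p' *v bgrad V p) =
     (curl2 (bgrad V ((p' + 2) mod 3)) \<bullet> bgrad V p) * (curl2 (bgrad V p) \<bullet> bgrad V ((p' + 1) mod 3))" for p p'
    unfolding S2_def phi_dev_outer by (simp add: curl_self)
  have offdiag: "\<And>p p'. p \<in> ?Q \<Longrightarrow> p' \<in> ?Q \<Longrightarrow> p \<noteq> p' \<Longrightarrow> ?u p \<bullet> (S2 V p' *v bgrad V ((\<lambda>p. p) p)) = 0"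
  proof -
    fix p p' assume a: "p \<in> ?Q" "p' \<in> ?Q" "p \<noteq> p'"
    show "?u p \<bullet> (S2 V p' *v bgrad V ((\<lambda>p. p) p)) = 0"
      unfolding phi using three_cases[OF a(1)] three_cases[OF a(2)] a(3) by (elim disjE; simp add: curl_self two_eq)
  qed
  have diag: "\<And>p. p \<in> ?Q \<Longrightarrow> ?u p \<bullet> (S2 V p *v bgrad V ((\<lambda>p. p) p)) \<noteq> 0"
  proof -
    fix p assume p: "p \<in> ?Q"
    have "(p + 2) mod 3 \<in> ?Q \<and> (p + 1) mod 3 \<in> ?Q \<and> (p + 2) mod 3 \<noteq> p \<and> (p + 1) mod 3 \<noteq> p"
      using three_cases[OF p] by (elim disjE; simp add: two_eq)
    then show "?u p \<bullet> (S2 V p *v bgrad V ((\<lambda>p. p) p)) \<noteq> 0"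
      unfolding phi using curl_nz[OF nd] p by auto
  qed
  have uperp: "\<And>p. p \<in> ?Q \<Longrightarrow> ?u p \<bullet> bgrad V ((\<lambda>p. p) p) = 0" by (simp add: curl_self)
  have trS: "\<And>p. p \<in> ?Q \<Longrightarrow> trace (S2 V p) = 0" unfolding S2_def by (rule trace_dev)
  have tangS: "\<And>p j n. p \<in> ?Q \<Longrightarrow> j \<in> {0..CARD(2)} \<Longrightarrow> j \<noteq> (\<lambda>p. p) p \<Longrightarrow> unit_normal V j n \<Longrightarrow> tang_part (S2 V p) n = 0"
  proof -
    fix p j n assume p: "p \<in> ?Q" and j: "j \<in> {0..CARD(2)}" and jp: "j \<noteq> (\<lambda>p. p) p" and n: "unit_normal V j n"
    have "curl2 (bgrad V ((p + 2) mod 3)) \<bullet> bgrad V j = 0 \<or> bgrad V ((p + 1) mod 3) = bgrad V j"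
      using three_cases[OF p] three_cases'[OF j] jp by (elim disjE; simp add: curl_self two_eq)
    then show "tang_part (S2 V p) n = 0" unfolding S2_def by (rule tang_zero[OF nd j n])
  qed
  have spanD: "\<And>N. trace N = 0 \<Longrightarrow> (\<And>p. p \<in> ?Q \<Longrightarrow> ?u p \<bullet> (N *v bgrad V ((\<lambda>p. p) p)) = 0) \<Longrightarrow> N = 0"
  proof -
    fix N :: "real^2^2" assume tr: "trace N = 0" and z: "\<And>p. p \<in> ?Q \<Longrightarrow> ?u p \<bullet> (N *v bgrad V ((\<lambda>p. p) p)) = 0"
    show "N = 0"
    proof (rule eigen_zero[OF nd _ tr])
      fix j assume j: "j \<in> {0..CARD(2)}"
      show "\<exists>\<nu>. N *v bgrad V j = \<nu> *\<^sub>R bgrad V j"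
      proof (rule par_generic[OF nd j])
        have "(j + 2) mod 3 \<in> {0..CARD(2)} \<and> (j + 2) mod 3 \<noteq> j" using three_cases'[OF j] by (elim disjE; simp add: two_eq)
        then show "(j + 2) mod 3 \<in> {0..CARD(2)}" "(j + 2) mod 3 \<noteq> j" by auto
      next
        fix i assume i: "i \<in> {0..CARD(2)}" "i \<noteq> j" "i \<noteq> (j + 2) mod 3"
        have ji: "i = (j + 1) mod 3" using three_cases'[OF i(1)] three_cases'[OF j] i(2,3) by (elim disjE; simp add: two_eq)
        show "\<exists>t. t \<bullet> (N *v bgrad V j) = 0 \<and> t \<bullet> bgrad V i \<noteq> 0 \<and>
              (\<forall>m\<in>{0..CARD(2)}. m \<noteq> (j + 2) mod 3 \<longrightarrow> m \<noteq> i \<longrightarrow> t \<bullet> bgrad V m = 0)"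
        proof (intro exI conjI ballI impI)
          show "curl2 (bgrad V j) \<bullet> (N *v bgrad V j) = 0" using z[of j] j by simp
          show "curl2 (bgrad V j) \<bullet> bgrad V i \<noteq> 0" using curl_nz[OF nd, of j i] i j by simp
          fix m assume m: "m \<in> {0..CARD(2)}" "m \<noteq> (j + 2) mod 3" "m \<noteq> i"
          then have "m = j" using three_cases'[OF m(1)] three_cases'[OF j] ji by (elim disjE; simp add: two_eq)
          then show "curl2 (bgrad V j) \<bullet> bgrad V m = 0" by (simp add: curl_self)
        qed
      qed
    qed
  qed
  show "\<forall>b\<in>Bub_sp k V. \<exists>\<mu>. (\<forall>i\<in>{0..2}. poly_fun (k - 1) (\<mu> i)) \<and>
            b = (\<lambda>x. \<Sum>i\<in>{0..2}. (\<mu> i x * bary V i x) *\<^sub>R S2 V i)"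
    using bubble_repr[where V=V and Q="?Q" and \<iota>="\<lambda>p. p" and S="S2 V" and u="?u" and k=k,
        OF nd k fQ \<iota>Q offdiag diag spanD uperp trS] by blast
  have "fdim (Bub_sp k V) = card ?Q * card (Mset (k - 1) :: (2 \<Rightarrow> nat) set)"
    by (rule bubble_dim[where V=V and Q="?Q" and \<iota>="\<lambda>p. p" and S="S2 V" and u="?u" and k=k,
        OF nd k fQ \<iota>Q offdiag diag spanD uperp trS tangS])
  then show "fdim (Bub_sp k V) = 3 * card (Mset (k - 1) :: (2 \<Rightarrow> nat) set)" by simp
qed

lemma cross_dot_simps:
  "cross3 x y \<bullet> x = 0" "cross3 x y \<bullet> y = 0" "x \<bullet> cross3 x y = 0" "y \<bullet> cross3 x y = 0"
  by (simp_all add: cross3_simps)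

lemma triple_binet:
  "(cross3 a b \<bullet> c) * (cross3 x y \<bullet> z) =
    (a\<bullet>x)*((b\<bullet>y)*(c\<bullet>z) - (b\<bullet>z)*(c\<bullet>y)) - (a\<bullet>y)*((b\<bullet>x)*(c\<bullet>z) - (b\<bullet>z)*(c\<bullet>x))
    + (a\<bullet>z)*((b\<bullet>x)*(c\<bullet>y) - (b\<bullet>y)*(c\<bullet>x))"
  unfolding cross3_def by (simp add: inner_vec_def sum_3) algebra

lemma four_cases: "p \<in> {0..3::nat} \<Longrightarrow> p = 0 \<or> p = 1 \<or> p = 2 \<or> p = 3" by auto
lemma four_cases': "p \<in> {0..CARD(3)} \<Longrightarrow> p = 0 \<or> p = 1 \<or> p = 2 \<or> p = 3" by auto

lemma triple_nz:
  fixes V :: "nat \<Rightarrow> real^3"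
  assumes nd: "nondeg_simplex V" and a: "a \<in> {0..3}" and b: "b \<in> {0..3}" and c: "c \<in> {0..3}"
    and ab: "a \<noteq> b" and ac: "a \<noteq> c" and bc: "b \<noteq> c"
  shows "cross3 (bgrad V a) (bgrad V b) \<bullet> bgrad V c \<noteq> 0"
proof -
  define l where "l = 6 - a - b - c"
  have l: "l \<in> {0..3} \<and> l \<noteq> a \<and> l \<noteq> b \<and> l \<noteq> c" unfolding l_def
    using four_cases[OF a] four_cases[OF b] four_cases[OF c] ab ac bc by (elim disjE; simp add: two_eq three_eq)
  have I: "{0..CARD(3)} = {0..3::nat}" by simp
  have "(cross3 (bgrad V a) (bgrad V b) \<bullet> bgrad V c) * (cross3 (V a - V l) (V b - V l) \<bullet> (V c - V l)) = 1"
    unfolding triple_binet using a b c l ab ac bc bgrad_diff[OF nd, unfolded I] by simp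
  then show ?thesis by auto
qed


definition u3 :: "(nat \<Rightarrow> real^3) \<Rightarrow> nat \<times> nat \<Rightarrow> real^3" where
  "u3 V p = (if fst p = 0 then cross3 (bgrad V (snd p)) (bgrad V ((snd p + 2) mod 4))
                         else cross3 (bgrad V (snd p)) (bgrad V ((snd p + 1) mod 4)))"

lemma phi3: "u3 V (q, i) \<bullet> (S3 V q' i' *v bgrad V i) =
     (if q' = 0 then (cross3 (bgrad V ((i' + 2) mod 4)) (bgrad V ((i' + 3) mod 4)) \<bullet> bgrad V i) * (u3 V (q, i) \<bullet> bgrad V ((i' + 1) mod 4))
      else (cross3 (bgrad V ((i' + 3) mod 4)) (bgrad V ((i' + 1) mod 4)) \<bullet> bgrad V i) * (u3 V (q, i) \<bullet> bgrad V ((i' + 2) mod 4)))"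
proof -
  have "u3 V (q, i) \<bullet> bgrad V i = 0" unfolding u3_def by (simp add: cross_dot_simps)
  then show ?thesis unfolding S3_def by (simp add: phi_dev_outer)
qed


lemma offdiag3:
  assumes "q \<in> {0..1}" "q' \<in> {0..1}" "i \<in> {0..3}" "i' \<in> {0..3}" "(q, i) \<noteq> (q', i')"
  shows "u3 V (q, i) \<bullet> (S3 V q' i' *v bgrad V i) = 0"
  unfolding phi3 unfolding u3_def
  using assms(5) four_cases[OF assms(3)] four_cases[OF assms(4)] assms(1,2)
  by (auto simp: cross_dot_simps two_eq three_eq)

lemma diag3:
  fixes V :: "nat \<Rightarrow> real^3"
  assumes nd: "nondeg_simplex V" and "q \<in> {0..1}" "i \<in> {0..3}"
  shows "u3 V (q, i) \<bullet> (S3 V q i *v bgrad V i) \<noteq> 0"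
  unfolding phi3 unfolding u3_def
  using four_cases[OF assms(3)] assms(2)
  by (auto simp: triple_nz[OF nd] two_eq three_eq)

lemma main3:
  fixes V :: "nat \<Rightarrow> real^3"
  assumes nd: "nondeg_simplex V" and k: "k \<ge> 1"
  shows "(\<forall>b\<in>Bub_sp k V. \<exists>\<mu> :: nat \<Rightarrow> nat \<Rightarrow> real^3 \<Rightarrow> real.
                (\<forall>q\<in>{0..1}. \<forall>i\<in>{0..3}. poly_fun (k - 1) (\<mu> q i)) \<and>
                b = (\<lambda>x. \<Sum>q\<in>{0..1}. \<Sum>i\<in>{0..3}. (\<mu> q i x * bary V i x) *\<^sub>R S3 V q i))"
    "fdim (Bub_sp k V) = 8 * card (Mset (k - 1) :: (3 \<Rightarrow> nat) set)"
proof -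
  let ?Q = "{0..1::nat} \<times> {0..3::nat}"
  let ?g = "bgrad V"
  define u where "u = u3 V"
  define S where "S p = S3 V (fst p) (snd p)" for p :: "nat \<times> nat"
  have I: "{0..CARD(3)} = {0..3::nat}" by simp
  have fQ: "finite ?Q" by simp
  have \<iota>Q: "\<And>p. p \<in> ?Q \<Longrightarrow> snd p \<in> {0..CARD(3)}" by auto
  have Qc: "q = 0 \<or> q = 1" if "(q, i) \<in> ?Q" for q i using that by auto
  have Qi: "i \<in> {0..3}" if "(q, i) \<in> ?Q" for q i using that by auto
  have uperp0: "u p \<bullet> ?g (snd p) = 0" for p unfolding u_def u3_def by (simp add: cross_dot_simps)
  have offdiag: "\<And>p p'. p \<in> ?Q \<Longrightarrow> p' \<in> ?Q \<Longrightarrow> p \<noteq> p' \<Longrightarrow> u p \<bullet> (S p' *v ?g (snd p)) = 0"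
  proof -
    fix p p' assume a: "p \<in> ?Q" "p' \<in> ?Q" "p \<noteq> p'"
    obtain q i q' i' where pp: "p = (q, i)" "p' = (q', i')" by fastforce
    show "u p \<bullet> (S p' *v ?g (snd p)) = 0" unfolding u_def S_def pp fst_conv snd_conv
      by (rule offdiag3) (use a pp in auto)
  qed
  have diag: "\<And>p. p \<in> ?Q \<Longrightarrow> u p \<bullet> (S p *v ?g (snd p)) \<noteq> 0"
  proof -
    fix p assume a: "p \<in> ?Q"
    obtain q i where pp: "p = (q, i)" by fastforce
    show "u p \<bullet> (S p *v ?g (snd p)) \<noteq> 0" unfolding u_def S_def pp fst_conv snd_conv
      by (rule diag3[OF nd]) (use a pp in auto)
  qed
  have uperp: "\<And>p. p \<in> ?Q \<Longrightarrow> u p \<bullet> ?g (snd p) = 0" by (rule uperp0)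
  have trS: "\<And>p. p \<in> ?Q \<Longrightarrow> trace (S p) = 0" unfolding S_def S3_def by (simp add: trace_dev)
  have tangS: "\<And>p j n. p \<in> ?Q \<Longrightarrow> j \<in> {0..CARD(3)} \<Longrightarrow> j \<noteq> snd p \<Longrightarrow> unit_normal V j n \<Longrightarrow> tang_part (S p) n = 0"
  proof -
    fix p j n assume a: "p \<in> ?Q" and j: "j \<in> {0..CARD(3)}" and jp: "j \<noteq> snd p" and n: "unit_normal V j n"
    obtain q i where pp: "p = (q, i)" by fastforce
    show "tang_part (S p) n = 0"
    proof (cases "q = 0")
      case True
      have "cross3 (?g ((i + 2) mod 4)) (?g ((i + 3) mod 4)) \<bullet> ?g j = 0 \<or> ?g ((i + 1) mod 4) = ?g j"
        using four_cases[OF Qi[OF a[unfolded pp]]] four_cases'[OF j] jp[unfolded pp]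
        by (elim disjE; simp add: cross_dot_simps two_eq three_eq)
      then show ?thesis unfolding S_def S3_def pp using True by (simp add: tang_zero[OF nd j n])
    next
      case False
      have "cross3 (?g ((i + 3) mod 4)) (?g ((i + 1) mod 4)) \<bullet> ?g j = 0 \<or> ?g ((i + 2) mod 4) = ?g j"
        using four_cases[OF Qi[OF a[unfolded pp]]] four_cases'[OF j] jp[unfolded pp]
        by (elim disjE; simp add: cross_dot_simps two_eq three_eq)
      then show ?thesis unfolding S_def S3_def pp using False by (simp add: tang_zero[OF nd j n])
    qed
  qed
  have spanD: "\<And>N. trace N = 0 \<Longrightarrow> (\<And>p. p \<in> ?Q \<Longrightarrow> u p \<bullet> (N *v ?g (snd p)) = 0) \<Longrightarrow> N = 0"
  proof -
    fix N :: "real^3^3" assume tr: "trace N = 0" and z: "\<And>p. p \<in> ?Q \<Longrightarrow> u p \<bullet> (N *v ?g (snd p)) = 0"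
    show "N = 0"
    proof (rule eigen_zero[OF nd _ tr])
      fix j assume j: "j \<in> {0..CARD(3)}"
      have z0: "cross3 (?g j) (?g ((j + 2) mod 4)) \<bullet> (N *v ?g j) = 0" using z[of "(0, j)"] j by (simp add: u_def u3_def)
      have z1: "cross3 (?g j) (?g ((j + 1) mod 4)) \<bullet> (N *v ?g j) = 0" using z[of "(1, j)"] j by (simp add: u_def u3_def)
      show "\<exists>\<nu>. N *v ?g j = \<nu> *\<^sub>R ?g j"
      proof (rule par_generic[OF nd j])
        have "(j + 3) mod 4 \<in> {0..CARD(3)} \<and> (j + 3) mod 4 \<noteq> j"
          using four_cases'[OF j] by (elim disjE; simp add: two_eq three_eq)
        then show "(j + 3) mod 4 \<in> {0..CARD(3)}" "(j + 3) mod 4 \<noteq> j" by auto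
      next
        fix i assume i: "i \<in> {0..CARD(3)}" "i \<noteq> j" "i \<noteq> (j + 3) mod 4"
        have ji: "i = (j + 1) mod 4 \<or> i = (j + 2) mod 4"
          using four_cases'[OF i(1)] four_cases'[OF j] i(2,3) by (elim disjE; simp add: two_eq three_eq)
        then show "\<exists>t. t \<bullet> (N *v ?g j) = 0 \<and> t \<bullet> ?g i \<noteq> 0 \<and>
              (\<forall>m\<in>{0..CARD(3)}. m \<noteq> (j + 3) mod 4 \<longrightarrow> m \<noteq> i \<longrightarrow> t \<bullet> ?g m = 0)"
        proof
          assume ji: "i = (j + 1) mod 4"
          show ?thesis
          proof (intro exI conjI ballI impI)
            show "cross3 (?g j) (?g ((j + 2) mod 4)) \<bullet> (N *v ?g j) = 0" by (rule z0)
            show "cross3 (?g j) (?g ((j + 2) mod 4)) \<bullet> ?g i \<noteq> 0" unfolding ji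
              using four_cases'[OF j] by (elim disjE; simp add: triple_nz[OF nd] two_eq three_eq)
            fix m assume m: "m \<in> {0..CARD(3)}" "m \<noteq> (j + 3) mod 4" "m \<noteq> i"
            then show "cross3 (?g j) (?g ((j + 2) mod 4)) \<bullet> ?g m = 0" unfolding ji
              using four_cases'[OF m(1)] four_cases'[OF j] by (elim disjE; simp add: cross_dot_simps two_eq three_eq)
          qed
        next
          assume ji: "i = (j + 2) mod 4"
          show ?thesis
          proof (intro exI conjI ballI impI)
            show "cross3 (?g j) (?g ((j + 1) mod 4)) \<bullet> (N *v ?g j) = 0" by (rule z1)
            show "cross3 (?g j) (?g ((j + 1) mod 4)) \<bullet> ?g i \<noteq> 0" unfolding ji
              using four_cases'[OF j] by (elim disjE; simp add: triple_nz[OF nd] two_eq three_eq)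
            fix m assume m: "m \<in> {0..CARD(3)}" "m \<noteq> (j + 3) mod 4" "m \<noteq> i"
            then show "cross3 (?g j) (?g ((j + 1) mod 4)) \<bullet> ?g m = 0" unfolding ji
              using four_cases'[OF m(1)] four_cases'[OF j] by (elim disjE; simp add: cross_dot_simps two_eq three_eq)
          qed
        qed
      qed
    qed
  qed
  show "\<forall>b\<in>Bub_sp k V. \<exists>\<mu> :: nat \<Rightarrow> nat \<Rightarrow> real^3 \<Rightarrow> real.
                (\<forall>q\<in>{0..1}. \<forall>i\<in>{0..3}. poly_fun (k - 1) (\<mu> q i)) \<and>
                b = (\<lambda>x. \<Sum>q\<in>{0..1}. \<Sum>i\<in>{0..3}. (\<mu> q i x * bary V i x) *\<^sub>R S3 V q i)"
  proof
    fix b assume b: "b \<in> Bub_sp k V"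
    obtain \<mu> where \<mu>: "\<forall>p\<in>?Q. poly_fun (k - 1) (\<mu> p)" "b = (\<lambda>x. \<Sum>p\<in>?Q. (\<mu> p x * bary V (snd p) x) *\<^sub>R S p)"
      using bubble_repr[where V=V and Q="?Q" and \<iota>="snd" and S="S" and u="u" and k=k and b=b,
        OF nd k fQ \<iota>Q offdiag diag spanD uperp trS b] by blast
    show "\<exists>\<mu> :: nat \<Rightarrow> nat \<Rightarrow> real^3 \<Rightarrow> real.
                (\<forall>q\<in>{0..1}. \<forall>i\<in>{0..3}. poly_fun (k - 1) (\<mu> q i)) \<and>
                b = (\<lambda>x. \<Sum>q\<in>{0..1}. \<Sum>i\<in>{0..3}. (\<mu> q i x * bary V i x) *\<^sub>R S3 V q i)"
    proof (intro exI conjI)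
      show "\<forall>q\<in>{0..1}. \<forall>i\<in>{0..3}. poly_fun (k - 1) (\<mu> (q, i))" using \<mu>(1) by auto
      show "b = (\<lambda>x. \<Sum>q\<in>{0..1}. \<Sum>i\<in>{0..3}. (\<mu> (q, i) x * bary V i x) *\<^sub>R S3 V q i)"
        unfolding \<mu>(2) S_def by (subst sum.cartesian_product) (rule ext, rule sum.cong; auto)
    qed
  qed
  have "fdim (Bub_sp k V) = card ?Q * card (Mset (k - 1) :: (3 \<Rightarrow> nat) set)"
    by (rule bubble_dim[where V=V and Q="?Q" and \<iota>="snd" and S="S" and u="u" and k=k,
        OF nd k fQ \<iota>Q offdiag diag spanD uperp trS tangS])
  then show "fdim (Bub_sp k V) = 8 * card (Mset (k - 1) :: (3 \<Rightarrow> nat) set)" by (simp add: card_cartesian_product)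
qed

lemma card_eq_pairs: "card {p :: nat \<times> nat. fst p + snd p = n} = n + 1"
proof -
  have "{p :: nat \<times> nat. fst p + snd p = n} = (\<lambda>a. (a, n - a)) ` {0..n}" by force
  moreover have "inj_on (\<lambda>a. (a, n - a)) {0..n}" by (auto simp: inj_on_def)
  ultimately show ?thesis by (simp add: card_image)
qed

lemma fin_pairs: "finite {p :: nat \<times> nat. fst p + snd p \<le> m}"
  by (rule finite_subset[of _ "{0..m} \<times> {0..m}"]) auto

lemma card_pairs: "card {p :: nat \<times> nat. fst p + snd p \<le> m} * 2 = (m + 1) * (m + 2)"
proof (induction m)
  case 0
  have "{p :: nat \<times> nat. fst p + snd p \<le> 0} = {(0, 0)}" by auto
  then show ?case by simp
next
  case (Suc m)
  have "{p :: nat \<times> nat. fst p + snd p \<le> Suc m} = {p. fst p + snd p \<le> m} \<union> {p. fst p + snd p = Suc m}" by auto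
  moreover have "card ({p :: nat \<times> nat. fst p + snd p \<le> m} \<union> {p. fst p + snd p = Suc m})
      = card {p :: nat \<times> nat. fst p + snd p \<le> m} + card {p :: nat \<times> nat. fst p + snd p = Suc m}"
    by (rule card_Un_disjoint) (auto intro: fin_pairs finite_subset[OF _ fin_pairs[of "Suc m"]])
  ultimately show ?case using Suc card_eq_pairs[of "Suc m"] by simp
qed

lemma card_eq_triples: "card {p :: nat \<times> nat \<times> nat. fst p + fst (snd p) + snd (snd p) = n} * 2 = (n + 1) * (n + 2)"
proof -
  have "{p :: nat \<times> nat \<times> nat. fst p + fst (snd p) + snd (snd p) = n} = (\<lambda>q. (fst q, snd q, n - fst q - snd q)) ` {q. fst q + snd q \<le> n}"
    by (auto simp: image_iff)
  moreover have "inj_on (\<lambda>q. (fst q, snd q, n - fst q - snd q)) {q :: nat \<times> nat. fst q + snd q \<le> n}"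
    by (auto simp: inj_on_def prod_eq_iff)
  ultimately show ?thesis using card_pairs[of n] by (simp add: card_image)
qed

lemma fin_triples: "finite {p :: nat \<times> nat \<times> nat. fst p + fst (snd p) + snd (snd p) \<le> m}"
  by (rule finite_subset[of _ "{0..m} \<times> {0..m} \<times> {0..m}"]) auto

lemma card_triples: "card {p :: nat \<times> nat \<times> nat. fst p + fst (snd p) + snd (snd p) \<le> m} * 6 = (m + 1) * (m + 2) * (m + 3)"
proof (induction m)
  case 0
  have "{p :: nat \<times> nat \<times> nat. fst p + fst (snd p) + snd (snd p) \<le> 0} = {(0, 0, 0)}" by auto
  then show ?case by simp
next
  case (Suc m)
  let ?A = "{p :: nat \<times> nat \<times> nat. fst p + fst (snd p) + snd (snd p) \<le> m}"
  let ?B = "{p :: nat \<times> nat \<times> nat. fst p + fst (snd p) + snd (snd p) = Suc m}"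
  have "{p :: nat \<times> nat \<times> nat. fst p + fst (snd p) + snd (snd p) \<le> Suc m} = ?A \<union> ?B" by auto
  moreover have "card (?A \<union> ?B) = card ?A + card ?B"
    by (rule card_Un_disjoint) (auto intro: fin_triples finite_subset[OF _ fin_triples[of "Suc m"]])
  ultimately have "card {p :: nat \<times> nat \<times> nat. fst p + fst (snd p) + snd (snd p) \<le> Suc m} * 6 = card ?A * 6 + 3 * (card ?B * 2)"
    by simp
  also have "\<dots> = (m + 1) * (m + 2) * (m + 3) + 3 * ((m + 2) * (m + 3))"
  proof -
    have e: "(Suc m + 1) * (Suc m + 2) = (m + 2) * (m + 3)" by (simp add: algebra_simps)
    have B: "card ?B * 2 = (m + 2) * (m + 3)" by (simp only: e[symmetric] card_eq_triples)
    show ?thesis by (simp only: Suc.IH B)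
  qed
  also have "\<dots> = (Suc m + 1) * (Suc m + 2) * (Suc m + 3)" by (simp add: algebra_simps)
  finally show ?case .
qed

lemma card_Mset2: "card (Mset m :: (2 \<Rightarrow> nat) set) * 2 = (m + 1) * (m + 2)"
proof -
  have "bij_betw (\<lambda>\<alpha>. (\<alpha> 1, \<alpha> 2)) (Mset m :: (2 \<Rightarrow> nat) set) {p :: nat \<times> nat. fst p + snd p \<le> m}"
  proof (rule bij_betwI')
    fix \<alpha> \<beta> :: "2 \<Rightarrow> nat"
    show "((\<alpha> 1, \<alpha> 2) = (\<beta> 1, \<beta> 2)) = (\<alpha> = \<beta>)"
      by (auto simp: fun_eq_iff forall_2)
  next
    fix \<alpha> :: "2 \<Rightarrow> nat" assume "\<alpha> \<in> Mset m"
    then show "(\<alpha> 1, \<alpha> 2) \<in> {p. fst p + snd p \<le> m}" by (simp add: Mset_def sum_2)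
  next
    fix p :: "nat \<times> nat" assume p: "p \<in> {p. fst p + snd p \<le> m}"
    let ?\<alpha> = "\<lambda>i::2. if i = 1 then fst p else snd p"
    have a: "?\<alpha> \<in> Mset m" using p by (simp add: Mset_def sum_2)
    show "\<exists>\<alpha>\<in>Mset m. p = ((\<alpha>::2\<Rightarrow>nat) 1, \<alpha> 2)" by (rule bexI[OF _ a]) (simp add: prod_eq_iff)
  qed
  then have "card (Mset m :: (2 \<Rightarrow> nat) set) = card {p :: nat \<times> nat. fst p + snd p \<le> m}"
    by (rule bij_betw_same_card)
  then show ?thesis using card_pairs[of m] by simp
qed

lemma card_Mset3: "card (Mset m :: (3 \<Rightarrow> nat) set) * 6 = (m + 1) * (m + 2) * (m + 3)"
proof -
  have "bij_betw (\<lambda>\<alpha>. (\<alpha> 1, \<alpha> 2, \<alpha> 3)) (Mset m :: (3 \<Rightarrow> nat) set) {p :: nat \<times> nat \<times> nat. fst p + fst (snd p) + snd (snd p) \<le> m}"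
  proof (rule bij_betwI')
    fix \<alpha> \<beta> :: "3 \<Rightarrow> nat"
    show "((\<alpha> 1, \<alpha> 2, \<alpha> 3) = (\<beta> 1, \<beta> 2, \<beta> 3)) = (\<alpha> = \<beta>)"
      by (auto simp: fun_eq_iff forall_3)
  next
    fix \<alpha> :: "3 \<Rightarrow> nat" assume "\<alpha> \<in> Mset m"
    then show "(\<alpha> 1, \<alpha> 2, \<alpha> 3) \<in> {p. fst p + fst (snd p) + snd (snd p) \<le> m}" by (simp add: Mset_def sum_3)
  next
    fix p :: "nat \<times> nat \<times> nat" assume p: "p \<in> {p. fst p + fst (snd p) + snd (snd p) \<le> m}"
    let ?\<alpha> = "\<lambda>i::3. if i = 1 then fst p else if i = 2 then fst (snd p) else snd (snd p)"
    have a: "?\<alpha> \<in> Mset m" using p by (simp add: Mset_def sum_3)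
    show "\<exists>\<alpha>\<in>Mset m. p = ((\<alpha>::3\<Rightarrow>nat) 1, \<alpha> 2, \<alpha> 3)" by (rule bexI[OF _ a]) (simp add: prod_eq_iff)
  qed
  then have "card (Mset m :: (3 \<Rightarrow> nat) set) = card {p :: nat \<times> nat \<times> nat. fst p + fst (snd p) + snd (snd p) \<le> m}"
    by (rule bij_betw_same_card)
  then show ?thesis using card_triples[of m] by simp
qed

theorem lemma5p2:
  fixes k :: nat
  assumes "k \<ge> 1"
  shows "(\<forall>V :: nat \<Rightarrow> real^2. nondeg_simplex V \<longrightarrow>
            (\<forall>b\<in>Bub_sp k V. \<exists>\<mu> :: nat \<Rightarrow> real^2 \<Rightarrow> real.
                (\<forall>i\<in>{0..2}. poly_fun (k - 1) (\<mu> i)) \<and>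
                b = (\<lambda>x. \<Sum>i\<in>{0..2}. (\<mu> i x * bary V i x) *\<^sub>R S2 V i)) \<and>
            real (fdim (Bub_sp k V)) = 3 / 2 * real k * (real k + 1))
       \<and> (\<forall>V :: nat \<Rightarrow> real^3. nondeg_simplex V \<longrightarrow>
            (\<forall>b\<in>Bub_sp k V. \<exists>\<mu> :: nat \<Rightarrow> nat \<Rightarrow> real^3 \<Rightarrow> real.
                (\<forall>q\<in>{0..1}. \<forall>i\<in>{0..3}. poly_fun (k - 1) (\<mu> q i)) \<and>
                b = (\<lambda>x. \<Sum>q\<in>{0..1}. \<Sum>i\<in>{0..3}. (\<mu> q i x * bary V i x) *\<^sub>R S3 V q i)) \<and>
            real (fdim (Bub_sp k V)) = 8 / 6 * real k * (real k + 1) * (real k + 2))"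
proof (intro conjI allI impI)
  have km: "k - 1 + 1 = k" "k - 1 + 2 = k + 1" "k - 1 + 3 = k + 2" using assms by auto
  fix V :: "nat \<Rightarrow> real^2" assume nd: "nondeg_simplex V"
  show "\<forall>b\<in>Bub_sp k V. \<exists>\<mu> :: nat \<Rightarrow> real^2 \<Rightarrow> real.
                (\<forall>i\<in>{0..2}. poly_fun (k - 1) (\<mu> i)) \<and>
                b = (\<lambda>x. \<Sum>i\<in>{0..2}. (\<mu> i x * bary V i x) *\<^sub>R S2 V i)"
    by (rule main2(1)[OF nd assms])
  have c: "card (Mset (k - 1) :: (2 \<Rightarrow> nat) set) * 2 = k * (k + 1)"
    using card_Mset2[of "k - 1"] km by simp
  then have "real (card (Mset (k - 1) :: (2 \<Rightarrow> nat) set)) * 2 = real k * (real k + 1)"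
    by (metis of_nat_1 of_nat_add of_nat_mult of_nat_numeral)
  then show "real (fdim (Bub_sp k V)) = 3 / 2 * real k * (real k + 1)"
    unfolding main2(2)[OF nd assms] by simp
next
  have km: "k - 1 + 1 = k" "k - 1 + 2 = k + 1" "k - 1 + 3 = k + 2" using assms by auto
  fix V :: "nat \<Rightarrow> real^3" assume nd: "nondeg_simplex V"
  show "\<forall>b\<in>Bub_sp k V. \<exists>\<mu> :: nat \<Rightarrow> nat \<Rightarrow> real^3 \<Rightarrow> real.
                (\<forall>q\<in>{0..1}. \<forall>i\<in>{0..3}. poly_fun (k - 1) (\<mu> q i)) \<and>
                b = (\<lambda>x. \<Sum>q\<in>{0..1}. \<Sum>i\<in>{0..3}. (\<mu> q i x * bary V i x) *\<^sub>R S3 V q i)"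
    by (rule main3(1)[OF nd assms])
  have c: "card (Mset (k - 1) :: (3 \<Rightarrow> nat) set) * 6 = k * (k + 1) * (k + 2)"
    using card_Mset3[of "k - 1"] km by simp
  then have "real (card (Mset (k - 1) :: (3 \<Rightarrow> nat) set)) * 6 = real k * (real k + 1) * (real k + 2)"
    by (metis of_nat_1 of_nat_add of_nat_mult of_nat_numeral)
  then show "real (fdim (Bub_sp k V)) = 8 / 6 * real k * (real k + 1) * (real k + 2)"
    unfolding main3(2)[OF nd assms] by simp
qed


end
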